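(* Let $X$ be a BMC with kernel $\mathcal P$ and initial distribution $\nu$ such that Assumptions (F) and (F2) hold with $\alpha\in(0,1/\sqrt2)$, and let $\mathfrak f=(f_\ell,\ell\in\mathbb N)$ be a sequence in $F$ such that there is $g\in F$ with $|\mathcal Q^nf_\ell|\le g$ and $|\mathcal Q^nf_\ell-\langle\mu,f_\ell\rangle|\le\alpha^ng$ for all $n,\ell$. With $(p_n)$ and $N_{n,i}(\mathfrak f)$ as in the context, let $R_2(n)=\sum_{i\in\mathbb G_{n-p_n}}\mathbb E[N_{n,i}(\mathfrak f)\mid X_i]^2$. Then $\lim_{n\to\infty}\mathbb E[R_2(n)]=0$.
   Context: Let $(S,\mathscr S)$ be a measurable space. Let $\mathbb G_0=\{\emptyset\}$, $\mathbb G_k=\{0,1\}^k$ (words of length $k$), $\mathbb T_n=\bigcup_{r=0}^n\mathbb G_r$, $\mathbb T=\bigcup_{r\ge0}\mathbb G_r$; for $i\in\mathbb T$, $|i|$ is its length, $ij$ concatenation, $iA=\{ij:j\in A\}$; $|\mathbb G_n|=2^n$. Let $\mathcal P$ be a probability kernel from $S$ to $S^2$ and $\nu$ a probability measure on $S$. For $g:S^3\to\mathbb R$, $\mathcal Pg(x)=\int g(x,y,z)\mathcal P(x,dy,dz)$, and for $h:S^2\to\mathbb R$, $\mathcal Ph(x)=\int h(y,z)\mathcal P(x,dy,dz)$. A BMC with initial distribution $\nu$ and kernel $\mathcal P$ is a process $X=(X_i,i\in\mathbb T)$ with $X_\emptyset\sim\nu$ such that for all $k\ge0$ and bounded measurable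 $g_i:S^3\to\mathbb R$, $\mathbb E[\prod_{i\in\mathbb G_k}g_i(X_i,X_{i0},X_{i1})\mid\sigma(X_j,j\in\mathbb T_k)]=\prod_{i\in\mathbb G_k}\mathcal Pg_i(X_i)$. Let $\mathcal Q(x,A)=\frac12(\mathcal P(x,A\times S)+\mathcal P(x,S\times A))$, $\mathcal Qf(x)=\int f(y)\mathcal Q(x,dy)$, $\mathcal Q^n$ its iterates. Notation: $(f\otimes g)(x,y)=f(x)g(y)$, $\langle\mu,f\rangle=\int f\,d\mu$, $\tilde f=f-\langle\mu,f\rangle$, $M_A(f)=\sum_{i\in A}f(X_i)$. Assumption (F): $F$ is a set of real measurable functions on $S$ such that (i) $F$ is a vector space containing the constants; (ii) $f\in F\Rightarrow f^2\in F$; (iii) $F\subset L^1(\nu)$; (iv) for all $f_0,f_1\in F$ and $x\in S$, $f_0\otimes f_1\in L^1(\mathcal P(x,\cdot))$ and $\mathcal P(f_0\otimes f_1)\in F$. Assumption (F2): there exist a probability measure $\mu$ on $S$ (invariant for $\mathcal Q$) with $F\subset L^1(\mu)$ and $\alpha\in(0,1)$ such that for every $f\in F$ there is $g\in F$ with $|\mathcal Q^nf-\langle\mu,f\rangle|\le\alpha^ng$ for all $n$. The sequence $(p_n,n\in\mathbb N)$ is a non-decreasing sequence of positive integers with $p_n<n$, $\lim_n p_n/n=1$, and $\lim_n(n-p_n-\lambda\log n)=+\infty$ for every $\lambda>0$. For $n\in\mathbb N$ and $i\in\mathbb T_n$, $N_{n,i}(\mathfrak f)=|\mathbb G_n|^{-1/2}\sum_{\ell=0}^{n-|i|}M_{i\mathbb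 G_{n-|i|-\ell}}(\tilde f_\ell)$. *)

theory Defs
  imports "HOL-Probability.Probability"
begin

text \<open>Words on the binary tree: bool lists; child i0 = i @ [False], i1 = i @ [True].\<close>

definition Gen :: "nat \<Rightarrow> bool list set" where
  "Gen k = {w. length w = k}"

definition Tn :: "nat \<Rightarrow> bool list set" where
  "Tn k = {w. length w \<le> k}"

definition Pop3 :: "('s \<Rightarrow> ('s \<times> 's) measure) \<Rightarrow> ('s \<times> 's \<times> 's \<Rightarrow> real) \<Rightarrow> 's \<Rightarrow> real" where
  "Pop3 P g x = (\<integral> yz. g (x, fst yz, snd yz) \<partial>(P x))"

definition Pop2 :: "('s \<Rightarrow> ('s \<times> 's) measure) \<Rightarrow> ('s \<times> 's \<Rightarrow> real) \<Rightarrow> 's \<Rightarrow> real" where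
  "Pop2 P h x = (\<integral> yz. h yz \<partial>(P x))"

definition Qk :: "'s measure \<Rightarrow> ('s \<Rightarrow> ('s \<times> 's) measure) \<Rightarrow> 's \<Rightarrow> 's measure" where
  "Qk S P x = measure_of (space S) (sets S)
     (\<lambda>A. (emeasure (P x) (A \<times> space S) + emeasure (P x) (space S \<times> A)) / 2)"

definition Qop :: "'s measure \<Rightarrow> ('s \<Rightarrow> ('s \<times> 's) measure) \<Rightarrow> ('s \<Rightarrow> real) \<Rightarrow> 's \<Rightarrow> real" where
  "Qop S P f x = (\<integral> y. f y \<partial>(Qk S P x))"

definition hist :: "'w measure \<Rightarrow> 's measure \<Rightarrow> (bool list \<Rightarrow> 'w \<Rightarrow> 's) \<Rightarrow> nat \<Rightarrow> 'w measure" where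
  "hist M S X k = sigma (space M) (\<Union>j\<in>Tn k. {X j -` A \<inter> space M | A. A \<in> sets S})"

definition BMC :: "'w measure \<Rightarrow> 's measure \<Rightarrow> 's measure \<Rightarrow> ('s \<Rightarrow> ('s \<times> 's) measure)
    \<Rightarrow> (bool list \<Rightarrow> 'w \<Rightarrow> 's) \<Rightarrow> bool" where
  "BMC M S \<nu> P X \<longleftrightarrow>
     prob_space M \<and>
     (\<forall>i. X i \<in> M \<rightarrow>\<^sub>M S) \<and>
     distr M S (X []) = \<nu> \<and>
     (\<forall>k (g :: bool list \<Rightarrow> 's \<times> 's \<times> 's \<Rightarrow> real).
        (\<forall>i\<in>Gen k. g i \<in> borel_measurable (S \<Otimes>\<^sub>M S \<Otimes>\<^sub>M S) \<and> (\<exists>B. \<forall>t. \<bar>g i t\<bar> \<le> B)) \<longrightarrow>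
        (AE \<omega> in M.
           real_cond_exp M (hist M S X k)
             (\<lambda>\<omega>. \<Prod>i\<in>Gen k. g i (X i \<omega>, X (i @ [False]) \<omega>, X (i @ [True]) \<omega>)) \<omega>
           = (\<Prod>i\<in>Gen k. Pop3 P (g i) (X i \<omega>))))"

definition assumption_F :: "'s measure \<Rightarrow> 's measure \<Rightarrow> ('s \<Rightarrow> ('s \<times> 's) measure)
    \<Rightarrow> ('s \<Rightarrow> real) set \<Rightarrow> bool" where
  "assumption_F S \<nu> P F \<longleftrightarrow>
     F \<subseteq> borel_measurable S \<and>
     (\<forall>c::real. (\<lambda>_. c) \<in> F) \<and>
     (\<forall>f\<in>F. \<forall>h\<in>F. (\<lambda>x. f x + h x) \<in> F) \<and>
     (\<forall>f\<in>F. \<forall>c::real. (\<lambda>x. c * f x) \<in> F) \<and>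
     (\<forall>f\<in>F. (\<lambda>x. (f x)\<^sup>2) \<in> F) \<and>
     (\<forall>f\<in>F. integrable \<nu> f) \<and>
     (\<forall>f0\<in>F. \<forall>f1\<in>F.
        (\<forall>x\<in>space S. integrable (P x) (\<lambda>yz. f0 (fst yz) * f1 (snd yz))) \<and>
        Pop2 P (\<lambda>yz. f0 (fst yz) * f1 (snd yz)) \<in> F)"

definition assumption_F2 :: "'s measure \<Rightarrow> ('s \<Rightarrow> ('s \<times> 's) measure)
    \<Rightarrow> ('s \<Rightarrow> real) set \<Rightarrow> 's measure \<Rightarrow> real \<Rightarrow> bool" where
  "assumption_F2 S P F \<mu> \<alpha> \<longleftrightarrow>
     prob_space \<mu> \<and> sets \<mu> = sets S \<and>
     (\<forall>A\<in>sets S. (\<integral> x. measure (Qk S P x) A \<partial>\<mu>) = measure \<mu> A) \<and>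
     (\<forall>f\<in>F. integrable \<mu> f) \<and>
     0 < \<alpha> \<and> \<alpha> < 1 \<and>
     (\<forall>f\<in>F. \<exists>g\<in>F. \<forall>n. \<forall>x\<in>space S.
        \<bar>(Qop S P ^^ n) f x - (\<integral> y. f y \<partial>\<mu>)\<bar> \<le> \<alpha> ^ n * g x)"

definition MA :: "(bool list \<Rightarrow> 'w \<Rightarrow> 's) \<Rightarrow> bool list set \<Rightarrow> ('s \<Rightarrow> real) \<Rightarrow> 'w \<Rightarrow> real" where
  "MA X A f \<omega> = (\<Sum>j\<in>A. f (X j \<omega>))"

definition Nni :: "'s measure \<Rightarrow> (bool list \<Rightarrow> 'w \<Rightarrow> 's) \<Rightarrow> (nat \<Rightarrow> 's \<Rightarrow> real)
    \<Rightarrow> nat \<Rightarrow> bool list \<Rightarrow> 'w \<Rightarrow> real" where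
  "Nni \<mu> X f n i \<omega> = (1 / sqrt ((2::real) ^ n)) *
     (\<Sum>l\<in>{0..n - length i}.
        MA X ((\<lambda>j. i @ j) ` Gen (n - length i - l)) (\<lambda>x. f l x - (\<integral> y. f l y \<partial>\<mu>)) \<omega>)"

definition R2 :: "'w measure \<Rightarrow> 's measure \<Rightarrow> 's measure \<Rightarrow> (bool list \<Rightarrow> 'w \<Rightarrow> 's)
    \<Rightarrow> (nat \<Rightarrow> 's \<Rightarrow> real) \<Rightarrow> (nat \<Rightarrow> nat) \<Rightarrow> nat \<Rightarrow> 'w \<Rightarrow> real" where
  "R2 M S \<mu> X f p n \<omega> = (\<Sum>i\<in>Gen (n - p n).
      (real_cond_exp M (vimage_algebra (space M) (X i) S) (Nni \<mu> X f n i) \<omega>)\<^sup>2)"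

end

theory Submission
  imports Defs
begin


locale kern =
  fixes S :: "'s measure" and P :: "'s \<Rightarrow> ('s \<times> 's) measure"
  assumes kernel: "P \<in> S \<rightarrow>\<^sub>M prob_algebra (S \<Otimes>\<^sub>M S)"
begin

lemma Px: assumes "x \<in> space S" shows "prob_space (P x)" "sets (P x) = sets (S \<Otimes>\<^sub>M S)"
  "space (P x) = space S \<times> space S"
proof -
  have *: "sets (P x) = sets (S \<Otimes>\<^sub>M S)" "prob_space (P x)"
    using measurable_space[OF kernel assms] by (auto simp: space_prob_algebra)
  then show "prob_space (P x)" "sets (P x) = sets (S \<Otimes>\<^sub>M S)" by auto
  show "space (P x) = space S \<times> space S" using sets_eq_imp_space_eq[OF *(1)] by (simp add: space_pair_measure)
qed

lemma Qk_emeasure: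
  assumes x: "x \<in> space S" and A: "A \<in> sets S"
  shows "emeasure (Qk S P x) A = (emeasure (P x) (A \<times> space S) + emeasure (P x) (space S \<times> A)) / 2"
  unfolding Qk_def
proof (rule emeasure_measure_of_sigma[OF sets.sigma_algebra_axioms _ _ A])
  interpret prob_space "P x" using Px[OF x] by simp
  show "positive (sets S) (\<lambda>A. (emeasure (P x) (A \<times> space S) + emeasure (P x) (space S \<times> A)) / 2)"
    by (auto simp: positive_def)
  show "countably_additive (sets S) (\<lambda>A. (emeasure (P x) (A \<times> space S) + emeasure (P x) (space S \<times> A)) / 2)"
    unfolding countably_additive_def
  proof safe
    fix B :: "nat \<Rightarrow> 's set" assume B: "range B \<subseteq> sets S" "disjoint_family B"
    have s1: "(\<Sum>i. emeasure (P x) (B i \<times> space S)) = emeasure (P x) (\<Union>i. B i \<times> space S)"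
      using B Px[OF x] by (intro suminf_emeasure) (auto simp: disjoint_family_on_def)
    have s2: "(\<Sum>i. emeasure (P x) (space S \<times> B i)) = emeasure (P x) (\<Union>i. space S \<times> B i)"
      using B Px[OF x] by (intro suminf_emeasure) (auto simp: disjoint_family_on_def)
    have "(\<Sum>i. (emeasure (P x) (B i \<times> space S) + emeasure (P x) (space S \<times> B i)) / 2)
        = (\<Sum>i. (emeasure (P x) (B i \<times> space S) + emeasure (P x) (space S \<times> B i))) / 2"
      by (simp add: divide_ennreal_def ennreal_suminf_multc)
    also have "\<dots> = ((\<Sum>i. emeasure (P x) (B i \<times> space S)) + (\<Sum>i. emeasure (P x) (space S \<times> B i))) / 2"
      by (simp add: suminf_add)
    also have "\<dots> = (emeasure (P x) (\<Union>(B ` UNIV) \<times> space S) + emeasure (P x) (space S \<times> \<Union>(B ` UNIV))) / 2"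
      proof -
      have "(\<Union>i. B i \<times> space S) = \<Union>(B ` UNIV) \<times> space S" "(\<Union>i. space S \<times> B i) = space S \<times> \<Union>(B ` UNIV)" by auto
      then show ?thesis using s1 s2 by simp
    qed
    finally show "(\<Sum>i. (emeasure (P x) (B i \<times> space S) + emeasure (P x) (space S \<times> B i)) / 2) =
         (emeasure (P x) (\<Union>(B ` UNIV) \<times> space S) + emeasure (P x) (space S \<times> \<Union>(B ` UNIV))) / 2" .
  qed
qed

lemma Qk_sets[simp, measurable_cong]: "sets (Qk S P x) = sets S"
  unfolding Qk_def by (rule sets.sets_measure_of_eq)

lemma Qk_space[simp]: "space (Qk S P x) = space S"
  unfolding Qk_def by (rule sets.space_measure_of_eq)

lemma Qk_prob: assumes x: "x \<in> space S" shows "prob_space (Qk S P x)"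
proof
  interpret prob_space "P x" using Px[OF x] by simp
  have "space S \<times> space S = space (P x)" using Px[OF x] by simp
  then show "emeasure (Qk S P x) (space (Qk S P x)) = 1"
    using Qk_emeasure[OF x sets.top] by (simp add: emeasure_space_1)
qed

lemma Qk_nn:
  assumes x: "x \<in> space S" and h: "h \<in> borel_measurable S"
  shows "(\<integral>\<^sup>+ y. h y \<partial>Qk S P x) = ((\<integral>\<^sup>+ yz. h (fst yz) \<partial>P x) + (\<integral>\<^sup>+ yz. h (snd yz) \<partial>P x)) / 2"
  using h
proof (induct rule: borel_measurable_induct)
  note Px1 = Px[OF x]
  have mf[measurable]: "fst \<in> P x \<rightarrow>\<^sub>M S" "snd \<in> P x \<rightarrow>\<^sub>M S"
    unfolding measurable_cong_sets[OF Px1(2) refl] by (rule measurable_fst, rule measurable_snd)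
  {
  case (cong f g)
  have "(\<integral>\<^sup>+ y. f y \<partial>Qk S P x) = (\<integral>\<^sup>+ y. g y \<partial>Qk S P x)"
    using cong(3) by (intro nn_integral_cong) simp
  moreover have "(\<integral>\<^sup>+ yz. f (fst yz) \<partial>P x) = (\<integral>\<^sup>+ yz. g (fst yz) \<partial>P x)"
    using cong(3) Px1(3) by (intro nn_integral_cong) (simp add: mem_Times_iff)
  moreover have "(\<integral>\<^sup>+ yz. f (snd yz) \<partial>P x) = (\<integral>\<^sup>+ yz. g (snd yz) \<partial>P x)"
    using cong(3) Px1(3) by (intro nn_integral_cong) (simp add: mem_Times_iff)
  ultimately show ?case using cong(4) by simp
  next
  case (set A)
  have "(\<integral>\<^sup>+ yz. indicator A (fst yz) \<partial>P x) = (\<integral>\<^sup>+ yz. indicator (A \<times> space S) yz \<partial>P x)"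
    using Px1 by (intro nn_integral_cong) (auto simp: indicator_def)
  also have "\<dots> = emeasure (P x) (A \<times> space S)"
    using set Px1 by (intro nn_integral_indicator) auto
  finally have 1: "(\<integral>\<^sup>+ yz. indicator A (fst yz) \<partial>P x) = emeasure (P x) (A \<times> space S)" .
  have "(\<integral>\<^sup>+ yz. indicator A (snd yz) \<partial>P x) = (\<integral>\<^sup>+ yz. indicator (space S \<times> A) yz \<partial>P x)"
    using Px1 by (intro nn_integral_cong) (auto simp: indicator_def)
  also have "\<dots> = emeasure (P x) (space S \<times> A)"
    using set Px1 by (intro nn_integral_indicator) auto
  finally have 2: "(\<integral>\<^sup>+ yz. indicator A (snd yz) \<partial>P x) = emeasure (P x) (space S \<times> A)" .
  show ?case using set unfolding 1 2 by (simp add: Qk_emeasure[OF x])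
  next
  case (mult u c)
  have "(\<integral>\<^sup>+ y. c * u y \<partial>Qk S P x) = c * (\<integral>\<^sup>+ y. u y \<partial>Qk S P x)"
    using mult by (intro nn_integral_cmult) auto
  moreover have "(\<integral>\<^sup>+ yz. c * u (fst yz) \<partial>P x) = c * (\<integral>\<^sup>+ yz. u (fst yz) \<partial>P x)"
    using mult by (intro nn_integral_cmult) auto
  moreover have "(\<integral>\<^sup>+ yz. c * u (snd yz) \<partial>P x) = c * (\<integral>\<^sup>+ yz. u (snd yz) \<partial>P x)"
    using mult by (intro nn_integral_cmult) auto
  ultimately show ?case using mult by (simp add: ennreal_times_divide distrib_left)
  next
  case (add u v)
  have "(\<integral>\<^sup>+ y. v y + u y \<partial>Qk S P x) = (\<integral>\<^sup>+ y. v y \<partial>Qk S P x) + (\<integral>\<^sup>+ y. u y \<partial>Qk S P x)"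
    using add by (intro nn_integral_add) auto
  moreover have "(\<integral>\<^sup>+ yz. v (fst yz) + u (fst yz) \<partial>P x) = (\<integral>\<^sup>+ yz. v (fst yz) \<partial>P x) + (\<integral>\<^sup>+ yz. u (fst yz) \<partial>P x)"
    using add by (intro nn_integral_add) auto
  moreover have "(\<integral>\<^sup>+ yz. v (snd yz) + u (snd yz) \<partial>P x) = (\<integral>\<^sup>+ yz. v (snd yz) \<partial>P x) + (\<integral>\<^sup>+ yz. u (snd yz) \<partial>P x)"
    using add by (intro nn_integral_add) auto
  ultimately show ?case using add by (simp add: add_divide_distrib_ennreal algebra_simps)
  next
  case (seq U)
  have i1: "incseq (\<lambda>i. \<integral>\<^sup>+ yz. U i (fst yz) \<partial>P x)" "incseq (\<lambda>i. \<integral>\<^sup>+ yz. U i (snd yz) \<partial>P x)"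
    using seq(4) by (auto simp: incseq_def le_fun_def intro!: nn_integral_mono)
  have "(\<integral>\<^sup>+ y. (SUP i. U i) y \<partial>Qk S P x) = (SUP i. \<integral>\<^sup>+ y. U i y \<partial>Qk S P x)"
    using seq by (subst SUP_apply, intro nn_integral_monotone_convergence_SUP) auto
  moreover have "(\<integral>\<^sup>+ yz. (SUP i. U i) (fst yz) \<partial>P x) = (SUP i. \<integral>\<^sup>+ yz. U i (fst yz) \<partial>P x)"
    using seq by (subst SUP_apply, intro nn_integral_monotone_convergence_SUP) (auto simp: incseq_def le_fun_def)
  moreover have "(\<integral>\<^sup>+ yz. (SUP i. U i) (snd yz) \<partial>P x) = (SUP i. \<integral>\<^sup>+ yz. U i (snd yz) \<partial>P x)"
    using seq by (subst SUP_apply, intro nn_integral_monotone_convergence_SUP) (auto simp: incseq_def le_fun_def)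
  ultimately show ?case using seq(3) by (simp add: ennreal_SUP_add[OF i1, symmetric] SUP_divide_ennreal)
  }
qed

definition Qp :: "('s \<Rightarrow> ennreal) \<Rightarrow> 's \<Rightarrow> ennreal" where
  "Qp h x = (\<integral>\<^sup>+ y. h y \<partial>Qk S P x)"

lemma Qp_meas[measurable]: assumes h[measurable]: "h \<in> borel_measurable S" shows "Qp h \<in> borel_measurable S"
proof -
  have Pm[measurable]: "P \<in> S \<rightarrow>\<^sub>M subprob_algebra (S \<Otimes>\<^sub>M S)" using kernel by (rule measurable_prob_algebraD)
  have a: "(\<lambda>x. integral\<^sup>N (P x) (\<lambda>yz. h (fst yz))) \<in> borel_measurable S"
    by (rule nn_integral_measurable_subprob_algebra2[where N="S \<Otimes>\<^sub>M S"]) measurable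
  have b: "(\<lambda>x. integral\<^sup>N (P x) (\<lambda>yz. h (snd yz))) \<in> borel_measurable S"
    by (rule nn_integral_measurable_subprob_algebra2[where N="S \<Otimes>\<^sub>M S"]) measurable
  have "(\<lambda>x. (integral\<^sup>N (P x) (\<lambda>yz. h (fst yz)) + integral\<^sup>N (P x) (\<lambda>yz. h (snd yz))) / 2) \<in> borel_measurable S"
    using a b by measurable
  then show ?thesis
    by (rule measurable_cong[THEN iffD1, rotated]) (simp add: Qp_def Qk_nn[OF _ h])
qed

lemma Qp_pow_meas[measurable]: "h \<in> borel_measurable S \<Longrightarrow> (Qp ^^ m) h \<in> borel_measurable S"
  by (induct m) auto

lemma P3_meas[measurable]:
  assumes h[measurable]: "h \<in> borel_measurable (S \<Otimes>\<^sub>M S \<Otimes>\<^sub>M S)"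
  shows "(\<lambda>x. \<integral>\<^sup>+ yz. h (x, fst yz, snd yz) \<partial>P x) \<in> borel_measurable S"
proof -
  have Pm[measurable]: "P \<in> S \<rightarrow>\<^sub>M subprob_algebra (S \<Otimes>\<^sub>M S)" using kernel by (rule measurable_prob_algebraD)
  show ?thesis
    by (rule nn_integral_measurable_subprob_algebra2[where N="S \<Otimes>\<^sub>M S"]) measurable
qed

end

lemma SUP_min_nat: "(SUP N. min (x::ennreal) (of_nat N)) = x"
  using inf_SUP[of x "\<lambda>N. of_nat N" UNIV] by (simp add: inf_min ennreal_SUP_of_nat_eq_top)

lemma finite_Gen[simp]: "finite (Gen k)"
proof -
  have "finite {xs. set xs \<subseteq> (UNIV::bool set) \<and> length xs = k}" by (rule finite_lists_length_eq) simp
  moreover have "Gen k = {xs. set xs \<subseteq> UNIV \<and> length xs = k}" by (auto simp: Gen_def)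
  ultimately show ?thesis by simp
qed



locale bmcl = kern S P for S :: "'s measure" and P +
  fixes M :: "'w measure" and \<nu> :: "'s measure" and X :: "bool list \<Rightarrow> 'w \<Rightarrow> 's"
  assumes bmc: "BMC M S \<nu> P X"
begin

lemma probM: "prob_space M" using bmc by (simp add: BMC_def)

lemma X_meas[measurable]: "X i \<in> M \<rightarrow>\<^sub>M S" using bmc by (simp add: BMC_def)

lemma X_space: "\<omega> \<in> space M \<Longrightarrow> X i \<omega> \<in> space S"
  using measurable_space[OF X_meas] .

definition gens :: "nat \<Rightarrow> 'w set set" where
  "gens k = (\<Union>j\<in>Tn k. {X j -` A \<inter> space M | A. A \<in> sets S})"

lemma gens_sub: "gens k \<subseteq> Pow (space M)" by (auto simp: gens_def)

lemma sets_hist: "sets (hist M S X k) = sigma_sets (space M) (gens k)"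
  unfolding hist_def gens_def[symmetric] using gens_sub by (rule sets_measure_of)

lemma space_hist[simp]: "space (hist M S X k) = space M"
  unfolding hist_def gens_def[symmetric] using gens_sub by (rule space_measure_of)

lemma hist_subM: "sets (hist M S X k) \<subseteq> sets M"
  unfolding sets_hist
  by (rule sets.sigma_sets_subset) (auto simp: gens_def dest: measurable_sets[OF X_meas])

lemma subalg_hist: "subalgebra M (hist M S X k)"
  using hist_subM by (simp add: subalgebra_def)

lemma sfs_hist: "sigma_finite_subalgebra M (hist M S X k)"
proof -
  interpret prob_space M by (rule probM)
  have "finite_measure_subalgebra M (hist M S X k)"
    by unfold_locales (rule subalg_hist)
  then show ?thesis by (rule finite_measure_subalgebra_is_sigma_finite)
qed

lemma hist_mono: "k \<le> k' \<Longrightarrow> sets (hist M S X k) \<subseteq> sets (hist M S X k')"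
  unfolding sets_hist
  by (rule sigma_sets_mono') (auto simp: gens_def Tn_def intro!: exI[where x="_::bool list"] le_trans)

lemma gen_in_hist: "length j \<le> k \<Longrightarrow> A \<in> sets S \<Longrightarrow> X j -` A \<inter> space M \<in> sets (hist M S X k)"
  unfolding sets_hist by (rule sigma_sets.Basic) (auto simp: gens_def Tn_def)

lemma X_hist[measurable]: "length j \<le> k \<Longrightarrow> X j \<in> hist M S X k \<rightarrow>\<^sub>M S"
  unfolding measurable_def using gen_in_hist X_space by auto

lemma vimage_sub: "sets (vimage_algebra (space M) (X i) S) \<subseteq> sets (hist M S X (length i))"
  using gen_in_hist[of i "length i"] X_space by (auto simp: sets_vimage_algebra2 Pi_iff)


lemma Pop3_nn:
  assumes x: "x \<in> space S" and g[measurable]: "g \<in> borel_measurable (S \<Otimes>\<^sub>M S \<Otimes>\<^sub>M S)"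
    and gb: "\<And>t. 0 \<le> g t" "\<And>t. g t \<le> B"
  shows "(\<integral>\<^sup>+ yz. ennreal (g (x, fst yz, snd yz)) \<partial>P x) = ennreal (Pop3 P g x)"
proof -
  interpret prob_space "P x" using Px[OF x] by simp
  have mf[measurable]: "fst \<in> P x \<rightarrow>\<^sub>M S" "snd \<in> P x \<rightarrow>\<^sub>M S"
    unfolding measurable_cong_sets[OF Px(2)[OF x] refl] by (rule measurable_fst, rule measurable_snd)
  have gm: "(\<lambda>yz. g (x, fst yz, snd yz)) \<in> borel_measurable (P x)"
    using x by measurable
  have "integrable (P x) (\<lambda>yz. g (x, fst yz, snd yz))"
    by (rule integrable_const_bound[where B=B]) (use gb gm in auto)
  then show ?thesis unfolding Pop3_def using gb by (intro nn_integral_eq_integral) auto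
qed

lemma Pop3_bound:
  assumes x: "x \<in> space S" and g[measurable]: "g \<in> borel_measurable (S \<Otimes>\<^sub>M S \<Otimes>\<^sub>M S)"
    and gb: "\<And>t. 0 \<le> g t" "\<And>t. g t \<le> B"
  shows "0 \<le> Pop3 P g x \<and> Pop3 P g x \<le> B"
proof -
    interpret prob_space "P x" using Px[OF x] by simp
    have mf[measurable]: "fst \<in> P x \<rightarrow>\<^sub>M S" "snd \<in> P x \<rightarrow>\<^sub>M S"
      unfolding measurable_cong_sets[OF Px(2)[OF x] refl] by (rule measurable_fst, rule measurable_snd)
    have gm: "(\<lambda>yz. g (x, fst yz, snd yz)) \<in> borel_measurable (P x)"
      using x by measurable
    have ii: "integrable (P x) (\<lambda>yz. g (x, fst yz, snd yz))"
      by (rule integrable_const_bound[where B=B]) (use gb gm in auto)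
    have "Pop3 P g x \<le> (\<integral> yz. B \<partial>P x)" unfolding Pop3_def
      using ii gb by (intro integral_mono) auto
    then show ?thesis using gb by (auto simp: Pop3_def prob_space intro!: integral_nonneg_AE)
qed

lemma step_real:
  assumes i: "length i = k" and g[measurable]: "g \<in> borel_measurable (S \<Otimes>\<^sub>M S \<Otimes>\<^sub>M S)"
    and gb: "\<And>t. 0 \<le> g t" "\<And>t. g t \<le> B" and A: "A \<in> sets (hist M S X k)"
  shows "(\<integral>\<^sup>+ \<omega>. indicator A \<omega> * ennreal (g (X i \<omega>, X (i@[False]) \<omega>, X (i@[True]) \<omega>)) \<partial>M)
       = (\<integral>\<^sup>+ \<omega>. indicator A \<omega> * (\<integral>\<^sup>+ yz. ennreal (g (X i \<omega>, fst yz, snd yz)) \<partial>P (X i \<omega>)) \<partial>M)"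
proof -
  interpret prob_space M by (rule probM)
  interpret sigma_finite_subalgebra M "hist M S X k" by (rule sfs_hist)
  have AM: "A \<in> sets M" using A hist_subM by auto
  define G where "G j t = (if j = i then g t else 1)" for j t
  have Gm: "\<forall>j\<in>Gen k. G j \<in> borel_measurable (S \<Otimes>\<^sub>M S \<Otimes>\<^sub>M S) \<and> (\<exists>B. \<forall>t. \<bar>G j t\<bar> \<le> B)"
  proof
    fix j assume "j \<in> Gen k"
    show "G j \<in> borel_measurable (S \<Otimes>\<^sub>M S \<Otimes>\<^sub>M S) \<and> (\<exists>B. \<forall>t. \<bar>G j t\<bar> \<le> B)"
    proof (cases "j = i")
      case True
      have "G j = g" using True by (intro ext) (simp add: G_def)
      then show ?thesis using gb g by (auto intro!: exI[where x=B] abs_of_nonneg[THEN ord_eq_le_trans])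
    next
      case False
      have "G j = (\<lambda>_. 1)" using False by (intro ext) (simp add: G_def)
      then show ?thesis by auto
    qed
  qed
  have GI: "G i = g" by (intro ext) (simp add: G_def)
  have G1: "G j = (\<lambda>_. 1)" if "j \<noteq> i" for j using that by (intro ext) (simp add: G_def)
  have iG: "i \<in> Gen k" using i by (simp add: Gen_def)
  have AE1: "AE \<omega> in M. real_cond_exp M (hist M S X k)
             (\<lambda>\<omega>. \<Prod>j\<in>Gen k. G j (X j \<omega>, X (j @ [False]) \<omega>, X (j @ [True]) \<omega>)) \<omega>
           = (\<Prod>j\<in>Gen k. Pop3 P (G j) (X j \<omega>))"
    using bmc Gm unfolding BMC_def by blast
  define \<phi> where "\<phi> \<omega> = g (X i \<omega>, X (i@[False]) \<omega>, X (i@[True]) \<omega>)" for \<omega>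
  have \<phi>m[measurable]: "\<phi> \<in> borel_measurable M" unfolding \<phi>_def by measurable
  have prodG: "(\<lambda>\<omega>. \<Prod>j\<in>Gen k. G j (X j \<omega>, X (j @ [False]) \<omega>, X (j @ [True]) \<omega>)) = \<phi>"
    using iG by (auto simp: G_def \<phi>_def if_distrib cong: if_cong)
  have Pop1: "Pop3 P (\<lambda>_. 1) x = 1" if "x \<in> space S" for x
    using prob_space.prob_space[OF Px(1)[OF that]] by (simp add: Pop3_def)
  have prodP: "(\<Prod>j\<in>Gen k. Pop3 P (G j) (X j \<omega>)) = Pop3 P g (X i \<omega>)" if "\<omega> \<in> space M" for \<omega>
  proof -
    have "(\<Prod>j\<in>Gen k. Pop3 P (G j) (X j \<omega>)) = (\<Prod>j\<in>Gen k. if j = i then Pop3 P g (X i \<omega>) else 1)"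
      using Pop1 X_space[OF that] by (intro prod.cong) (auto simp: GI G1)
    then show ?thesis using iG by simp
  qed
  have AE2: "AE \<omega> in M. real_cond_exp M (hist M S X k) \<phi> \<omega> = Pop3 P g (X i \<omega>)"
    using AE1 prodP unfolding prodG by auto
  define \<psi> where "\<psi> x = enn2real (\<integral>\<^sup>+ yz. ennreal (g (x, fst yz, snd yz)) \<partial>P x)" for x
  have \<psi>m[measurable]: "\<psi> \<in> borel_measurable S" unfolding \<psi>_def
    using P3_meas[of "\<lambda>t. ennreal (g t)"] by measurable
  have \<psi>eq: "\<psi> x = Pop3 P g x" "ennreal (Pop3 P g x) = (\<integral>\<^sup>+ yz. ennreal (g (x, fst yz, snd yz)) \<partial>P x)"
    if "x \<in> space S" for x
    using Pop3_nn[OF that g gb] Pop3_bound[OF that g gb] by (auto simp: \<psi>_def)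
  have \<phi>i: "integrable M \<phi>"
    by (rule integrable_const_bound[where B=B]) (use gb in \<open>auto simp: \<phi>_def\<close>)
  have Pop_b: "0 \<le> Pop3 P g x \<and> Pop3 P g x \<le> B" if "x \<in> space S" for x
    using Pop3_bound[OF that g gb] .
  have Pi: "integrable M (\<lambda>\<omega>. Pop3 P g (X i \<omega>))"
  proof (rule integrable_const_bound[where B=B])
    show "AE x in M. norm (Pop3 P g (X i x)) \<le> B" using Pop_b X_space by auto
    have "(\<lambda>\<omega>. \<psi> (X i \<omega>)) \<in> borel_measurable M" by measurable
    then show "(\<lambda>\<omega>. Pop3 P g (X i \<omega>)) \<in> borel_measurable M"
      by (rule measurable_cong[THEN iffD1, rotated]) (simp add: \<psi>eq X_space)
  qed
  have "(\<integral> \<omega>. indicator A \<omega> * \<phi> \<omega> \<partial>M) = (\<integral> \<omega>\<in>A. \<phi> \<omega> \<partial>M)"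
    by (simp add: set_lebesgue_integral_def)
  also have "\<dots> = (\<integral> \<omega>\<in>A. real_cond_exp M (hist M S X k) \<phi> \<omega> \<partial>M)"
    by (rule real_cond_exp_intA[OF \<phi>i A])
  also have "\<dots> = (\<integral> \<omega>. indicator A \<omega> * Pop3 P g (X i \<omega>) \<partial>M)"
    unfolding set_lebesgue_integral_def
    using AM borel_measurable_integrable[OF Pi] by (intro integral_cong_AE) (use AE2 in auto)
  finally have E: "(\<integral> \<omega>. indicator A \<omega> * \<phi> \<omega> \<partial>M) = (\<integral> \<omega>. indicator A \<omega> * Pop3 P g (X i \<omega>) \<partial>M)" .
  have "(\<integral>\<^sup>+ \<omega>. indicator A \<omega> * ennreal (\<phi> \<omega>) \<partial>M) = (\<integral>\<^sup>+ \<omega>. ennreal (indicator A \<omega> * \<phi> \<omega>) \<partial>M)"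
    by (intro nn_integral_cong) (auto simp: indicator_def)
  also have "\<dots> = ennreal (\<integral> \<omega>. indicator A \<omega> * \<phi> \<omega> \<partial>M)"
    using integrable_mult_indicator[OF AM \<phi>i] gb
    by (intro nn_integral_eq_integral) (auto simp: \<phi>_def indicator_def)
  also have "\<dots> = ennreal (\<integral> \<omega>. indicator A \<omega> * Pop3 P g (X i \<omega>) \<partial>M)" by (simp add: E)
  also have "\<dots> = (\<integral>\<^sup>+ \<omega>. ennreal (indicator A \<omega> * Pop3 P g (X i \<omega>)) \<partial>M)"
    using integrable_mult_indicator[OF AM Pi] Pop_b X_space
    by (intro nn_integral_eq_integral[symmetric]) (auto simp: indicator_def)
  also have "\<dots> = (\<integral>\<^sup>+ \<omega>. indicator A \<omega> * (\<integral>\<^sup>+ yz. ennreal (g (X i \<omega>, fst yz, snd yz)) \<partial>P (X i \<omega>)) \<partial>M)"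
    using \<psi>eq(2) X_space by (intro nn_integral_cong) (auto simp: indicator_def)
  finally show ?thesis by (simp add: \<phi>_def)
qed


lemma min_mono_nat: "m \<le> n \<Longrightarrow> min (a::ennreal) (of_nat m) \<le> min a (of_nat n)"
  by (simp add: min.coboundedI2 min.mono)

lemma step_nn:
  assumes i: "length i = k" and h[measurable]: "h \<in> borel_measurable (S \<Otimes>\<^sub>M S \<Otimes>\<^sub>M S)"
    and A: "A \<in> sets (hist M S X k)"
  shows "(\<integral>\<^sup>+ \<omega>. indicator A \<omega> * h (X i \<omega>, X (i@[False]) \<omega>, X (i@[True]) \<omega>) \<partial>M)
       = (\<integral>\<^sup>+ \<omega>. indicator A \<omega> * (\<integral>\<^sup>+ yz. h (X i \<omega>, fst yz, snd yz) \<partial>P (X i \<omega>)) \<partial>M)"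
proof -
  have AM[measurable]: "A \<in> sets M" using A hist_subM by auto
  define g where "g N t = enn2real (min (h t) (of_nat N))" for N :: nat and t
  have ge: "ennreal (g N t) = min (h t) (of_nat N)" for N t
    by (cases "h t" rule: ennreal_cases) (auto simp: g_def min_def ennreal_of_nat_eq_real_of_nat top_unique)
  have gm[measurable]: "g N \<in> borel_measurable (S \<Otimes>\<^sub>M S \<Otimes>\<^sub>M S)" for N
    unfolding g_def by measurable
  have gb: "0 \<le> g N t" "g N t \<le> real N" for N t
    by (auto simp: g_def enn2real_leI min.coboundedI2)
  have eqN: "(\<integral>\<^sup>+ \<omega>. indicator A \<omega> * min (h (X i \<omega>, X (i@[False]) \<omega>, X (i@[True]) \<omega>)) (of_nat N) \<partial>M)
       = (\<integral>\<^sup>+ \<omega>. indicator A \<omega> * (\<integral>\<^sup>+ yz. min (h (X i \<omega>, fst yz, snd yz)) (of_nat N) \<partial>P (X i \<omega>)) \<partial>M)" for N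
    using step_real[OF i gm gb A] unfolding ge .
  have L: "(\<integral>\<^sup>+ \<omega>. indicator A \<omega> * h (X i \<omega>, X (i@[False]) \<omega>, X (i@[True]) \<omega>) \<partial>M)
     = (SUP N. \<integral>\<^sup>+ \<omega>. indicator A \<omega> * min (h (X i \<omega>, X (i@[False]) \<omega>, X (i@[True]) \<omega>)) (of_nat N) \<partial>M)"
  proof -
    have "(\<integral>\<^sup>+ \<omega>. indicator A \<omega> * h (X i \<omega>, X (i@[False]) \<omega>, X (i@[True]) \<omega>) \<partial>M)
       = (\<integral>\<^sup>+ \<omega>. (SUP N. indicator A \<omega> * min (h (X i \<omega>, X (i@[False]) \<omega>, X (i@[True]) \<omega>)) (of_nat N)) \<partial>M)"
      by (simp add: SUP_mult_left_ennreal[symmetric] SUP_min_nat)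
    also have "\<dots> = (SUP N. \<integral>\<^sup>+ \<omega>. indicator A \<omega> * min (h (X i \<omega>, X (i@[False]) \<omega>, X (i@[True]) \<omega>)) (of_nat N) \<partial>M)"
      by (rule nn_integral_monotone_convergence_SUP)
         (auto simp: incseq_def le_fun_def intro!: mult_left_mono min_mono_nat)
    finally show ?thesis .
  qed
  have R: "(\<integral>\<^sup>+ \<omega>. indicator A \<omega> * (\<integral>\<^sup>+ yz. h (X i \<omega>, fst yz, snd yz) \<partial>P (X i \<omega>)) \<partial>M)
     = (SUP N. \<integral>\<^sup>+ \<omega>. indicator A \<omega> * (\<integral>\<^sup>+ yz. min (h (X i \<omega>, fst yz, snd yz)) (of_nat N) \<partial>P (X i \<omega>)) \<partial>M)"
  proof -
    have inner: "(\<integral>\<^sup>+ yz. h (X i \<omega>, fst yz, snd yz) \<partial>P (X i \<omega>))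
        = (SUP N. \<integral>\<^sup>+ yz. min (h (X i \<omega>, fst yz, snd yz)) (of_nat N) \<partial>P (X i \<omega>))" if "\<omega> \<in> space M" for \<omega>
    proof -
      have x: "X i \<omega> \<in> space S" using X_space[OF that] .
      have mf[measurable]: "fst \<in> P (X i \<omega>) \<rightarrow>\<^sub>M S" "snd \<in> P (X i \<omega>) \<rightarrow>\<^sub>M S"
        unfolding measurable_cong_sets[OF Px(2)[OF x] refl] by (rule measurable_fst, rule measurable_snd)
      have "(\<integral>\<^sup>+ yz. h (X i \<omega>, fst yz, snd yz) \<partial>P (X i \<omega>))
          = (\<integral>\<^sup>+ yz. (SUP N. min (h (X i \<omega>, fst yz, snd yz)) (of_nat N)) \<partial>P (X i \<omega>))"
        by (simp add: SUP_min_nat)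
      also have "\<dots> = (SUP N. \<integral>\<^sup>+ yz. min (h (X i \<omega>, fst yz, snd yz)) (of_nat N) \<partial>P (X i \<omega>))"
      proof (rule nn_integral_monotone_convergence_SUP)
        have hm: "(\<lambda>yz. h (X i \<omega>, yz)) \<in> borel_measurable (P (X i \<omega>))"
          unfolding measurable_cong_sets[OF Px(2)[OF x] refl] using x by measurable
        show "incseq (\<lambda>N yz. min (h (X i \<omega>, fst yz, snd yz)) (of_nat N))"
          unfolding incseq_def le_fun_def using min_mono_nat by blast
        show "(\<lambda>yz. min (h (X i \<omega>, fst yz, snd yz)) (of_nat N)) \<in> borel_measurable (P (X i \<omega>))" for N
          using hm by simp
      qed
      finally show ?thesis .
    qed
    have m2: "(\<lambda>\<omega>. \<integral>\<^sup>+ yz. min (h (X i \<omega>, fst yz, snd yz)) (of_nat N) \<partial>P (X i \<omega>)) \<in> borel_measurable M" for N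
    proof -
      have "(\<lambda>x. \<integral>\<^sup>+ yz. (\<lambda>t. min (h t) (of_nat N)) (x, fst yz, snd yz) \<partial>P x) \<in> borel_measurable S"
        by (rule P3_meas) measurable
      then show ?thesis by measurable
    qed
    have "(\<integral>\<^sup>+ \<omega>. indicator A \<omega> * (\<integral>\<^sup>+ yz. h (X i \<omega>, fst yz, snd yz) \<partial>P (X i \<omega>)) \<partial>M)
      = (\<integral>\<^sup>+ \<omega>. (SUP N. indicator A \<omega> * (\<integral>\<^sup>+ yz. min (h (X i \<omega>, fst yz, snd yz)) (of_nat N) \<partial>P (X i \<omega>))) \<partial>M)"
      using inner by (intro nn_integral_cong) (simp add: SUP_mult_left_ennreal[symmetric])
    also have "\<dots> = (SUP N. \<integral>\<^sup>+ \<omega>. indicator A \<omega> * (\<integral>\<^sup>+ yz. min (h (X i \<omega>, fst yz, snd yz)) (of_nat N) \<partial>P (X i \<omega>)) \<partial>M)"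
    proof (rule nn_integral_monotone_convergence_SUP)
      show "incseq (\<lambda>N \<omega>. indicator A \<omega> * (\<integral>\<^sup>+ yz. min (h (X i \<omega>, fst yz, snd yz)) (of_nat N) \<partial>P (X i \<omega>)))"
        by (auto simp: incseq_def le_fun_def intro!: mult_left_mono nn_integral_mono min_mono_nat)
      show "(\<lambda>\<omega>. indicator A \<omega> * (\<integral>\<^sup>+ yz. min (h (X i \<omega>, fst yz, snd yz)) (of_nat N) \<partial>P (X i \<omega>))) \<in> borel_measurable M" for N
        using m2 by measurable
    qed
    finally show ?thesis .
  qed
  show ?thesis unfolding L R eqN ..
qed


lemma Qp_twice:
  assumes x: "x \<in> space S" and h[measurable]: "h \<in> borel_measurable S"
  shows "(\<integral>\<^sup>+ yz. h (fst yz) + h (snd yz) \<partial>P x) = 2 * Qp h x"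
proof -
  have mf[measurable]: "fst \<in> P x \<rightarrow>\<^sub>M S" "snd \<in> P x \<rightarrow>\<^sub>M S"
    unfolding measurable_cong_sets[OF Px(2)[OF x] refl] by (rule measurable_fst, rule measurable_snd)
  have "(\<integral>\<^sup>+ yz. h (fst yz) + h (snd yz) \<partial>P x) = (\<integral>\<^sup>+ yz. h (fst yz) \<partial>P x) + (\<integral>\<^sup>+ yz. h (snd yz) \<partial>P x)"
    by (rule nn_integral_add) auto
  also have "\<dots> = 2 * Qp h x"
    unfolding Qp_def Qk_nn[OF x h] ennreal_times_divide
    using mult_divide_eq_ennreal[of 2 "(\<integral>\<^sup>+ yz. h (fst yz) \<partial>P x) + (\<integral>\<^sup>+ yz. h (snd yz) \<partial>P x)"]
    by (simp add: mult.commute)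
  finally show ?thesis .
qed

end

lemma sum_Gen_Suc: "(\<Sum>j\<in>Gen (Suc m). F j) = (\<Sum>j\<in>Gen m. F (j @ [False]) + F (j @ [True]))"
proof -
  have G: "Gen (Suc m) = (\<lambda>j. j @ [False]) ` Gen m \<union> (\<lambda>j. j @ [True]) ` Gen m"
  proof (intro set_eqI iffI)
    fix w assume "w \<in> Gen (Suc m)"
    then have "length w = Suc m" by (simp add: Gen_def)
    then obtain v b where "w = v @ [b]" "length v = m"
      by (metis length_Suc_conv_rev)
    then show "w \<in> (\<lambda>j. j @ [False]) ` Gen m \<union> (\<lambda>j. j @ [True]) ` Gen m"
      by (cases b) (auto simp: Gen_def)
  qed (auto simp: Gen_def)
  have "(\<Sum>j\<in>Gen (Suc m). F j) = (\<Sum>j\<in>(\<lambda>j. j @ [False]) ` Gen m. F j) + (\<Sum>j\<in>(\<lambda>j. j @ [True]) ` Gen m. F j)"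
    unfolding G by (rule sum.union_disjoint) auto
  also have "\<dots> = (\<Sum>j\<in>Gen m. F (j @ [False])) + (\<Sum>j\<in>Gen m. F (j @ [True]))"
    by (simp add: sum.reindex inj_on_def)
  finally show ?thesis by (simp add: sum.distrib)
qed

context bmcl begin

lemma many_nn:
  assumes "length i = k" and "h \<in> borel_measurable S" and "A \<in> sets (hist M S X k)"
  shows "(\<integral>\<^sup>+ \<omega>. indicator A \<omega> * (\<Sum>j\<in>Gen m. h (X (i @ j) \<omega>)) \<partial>M)
       = (\<integral>\<^sup>+ \<omega>. indicator A \<omega> * (2 ^ m * (Qp ^^ m) h (X i \<omega>)) \<partial>M)"
  using assms
proof (induct m arbitrary: h)
  case 0
  then show ?case by (simp add: Gen_def)
next
  case (Suc m)
  note h[measurable] = Suc.prems(2)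
  have AM[measurable]: "A \<in> sets M" using Suc.prems(3) hist_subM by auto
  have Ak: "A \<in> sets (hist M S X (k + m))" using Suc.prems(3) hist_mono[of k "k+m"] by auto
  have step: "(\<integral>\<^sup>+ \<omega>. indicator A \<omega> * (h (X (i @ j @ [False]) \<omega>) + h (X (i @ j @ [True]) \<omega>)) \<partial>M)
      = (\<integral>\<^sup>+ \<omega>. indicator A \<omega> * (2 * Qp h (X (i @ j) \<omega>)) \<partial>M)" if j: "j \<in> Gen m" for j
  proof -
    have lj: "length (i @ j) = k + m" using j Suc.prems(1) by (simp add: Gen_def)
    have h3: "(\<lambda>t. h (fst (snd t)) + h (snd (snd t))) \<in> borel_measurable (S \<Otimes>\<^sub>M S \<Otimes>\<^sub>M S)" by measurable
    have "(\<integral>\<^sup>+ \<omega>. indicator A \<omega> * (h (X (i @ j @ [False]) \<omega>) + h (X (i @ j @ [True]) \<omega>)) \<partial>M)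
        = (\<integral>\<^sup>+ \<omega>. indicator A \<omega> * (\<integral>\<^sup>+ yz. h (fst yz) + h (snd yz) \<partial>P (X (i @ j) \<omega>)) \<partial>M)"
      using step_nn[OF lj h3 Ak] by simp
    also have "\<dots> = (\<integral>\<^sup>+ \<omega>. indicator A \<omega> * (2 * Qp h (X (i @ j) \<omega>)) \<partial>M)"
      using Qp_twice[OF X_space h] by (intro nn_integral_cong) simp
    finally show ?thesis .
  qed
  have "(\<integral>\<^sup>+ \<omega>. indicator A \<omega> * (\<Sum>j\<in>Gen (Suc m). h (X (i @ j) \<omega>)) \<partial>M)
      = (\<integral>\<^sup>+ \<omega>. (\<Sum>j\<in>Gen m. indicator A \<omega> * (h (X (i @ j @ [False]) \<omega>) + h (X (i @ j @ [True]) \<omega>))) \<partial>M)"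
    by (simp add: sum_Gen_Suc sum_distrib_left)
  also have "\<dots> = (\<Sum>j\<in>Gen m. \<integral>\<^sup>+ \<omega>. indicator A \<omega> * (h (X (i @ j @ [False]) \<omega>) + h (X (i @ j @ [True]) \<omega>)) \<partial>M)"
    by (rule nn_integral_sum) measurable
  also have "\<dots> = (\<Sum>j\<in>Gen m. \<integral>\<^sup>+ \<omega>. indicator A \<omega> * (2 * Qp h (X (i @ j) \<omega>)) \<partial>M)"
    using step by (rule sum.cong[OF refl])
  also have "\<dots> = (\<integral>\<^sup>+ \<omega>. (\<Sum>j\<in>Gen m. indicator A \<omega> * (2 * Qp h (X (i @ j) \<omega>))) \<partial>M)"
    by (rule nn_integral_sum[symmetric]) measurable
  also have "\<dots> = (\<integral>\<^sup>+ \<omega>. 2 * (indicator A \<omega> * (\<Sum>j\<in>Gen m. Qp h (X (i @ j) \<omega>))) \<partial>M)"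
    by (simp add: sum_distrib_left mult_ac)
  also have "\<dots> = 2 * (\<integral>\<^sup>+ \<omega>. indicator A \<omega> * (\<Sum>j\<in>Gen m. Qp h (X (i @ j) \<omega>)) \<partial>M)"
    by (rule nn_integral_cmult) measurable
  also have "\<dots> = 2 * (\<integral>\<^sup>+ \<omega>. indicator A \<omega> * (2 ^ m * (Qp ^^ m) (Qp h) (X i \<omega>)) \<partial>M)"
    using Suc.hyps[OF Suc.prems(1) Qp_meas[OF h] Suc.prems(3)] by simp
  also have "\<dots> = (\<integral>\<^sup>+ \<omega>. 2 * (indicator A \<omega> * (2 ^ m * (Qp ^^ m) (Qp h) (X i \<omega>))) \<partial>M)"
    by (rule nn_integral_cmult[symmetric]) measurable
  also have "\<dots> = (\<integral>\<^sup>+ \<omega>. indicator A \<omega> * (2 ^ Suc m * (Qp ^^ Suc m) h (X i \<omega>)) \<partial>M)"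
    by (simp add: funpow_Suc_right mult_ac del: funpow.simps)
  finally show ?case .
qed

end


context kern begin

lemma Qk_int:
  fixes G :: "'s \<Rightarrow> real"
  assumes x: "x \<in> space S" and G[measurable]: "G \<in> borel_measurable S"
    and i1: "integrable (P x) (\<lambda>yz. G (fst yz))" and i2: "integrable (P x) (\<lambda>yz. G (snd yz))"
  shows "integrable (Qk S P x) G"
    "Qop S P G x = (Pop2 P (\<lambda>yz. G (fst yz)) x + Pop2 P (\<lambda>yz. G (snd yz)) x) / 2"
proof -
  have mf[measurable]: "fst \<in> P x \<rightarrow>\<^sub>M S" "snd \<in> P x \<rightarrow>\<^sub>M S"
    unfolding measurable_cong_sets[OF Px(2)[OF x] refl] by (rule measurable_fst, rule measurable_snd)
  have fin1: "(\<integral>\<^sup>+ yz. ennreal (norm (G (fst yz))) \<partial>P x) < \<infinity>" "(\<integral>\<^sup>+ yz. ennreal (norm (G (snd yz))) \<partial>P x) < \<infinity>"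
    using i1 i2 by (auto simp: integrable_iff_bounded)
  have "(\<integral>\<^sup>+ y. ennreal (norm (G y)) \<partial>Qk S P x) < \<infinity>"
    using fin1 by (subst Qk_nn[OF x]) (auto simp: ennreal_divide_eq_top_iff top_unique less_top[symmetric])
  then show iQ: "integrable (Qk S P x) G"
    by (auto simp: integrable_iff_bounded)
  have absb: "(\<integral>\<^sup>+ yz. ennreal (\<phi> yz) \<partial>N) \<le> (\<integral>\<^sup>+ yz. ennreal \<bar>\<phi> yz\<bar> \<partial>N)"
     "(\<integral>\<^sup>+ yz. ennreal (- \<phi> yz) \<partial>N) \<le> (\<integral>\<^sup>+ yz. ennreal \<bar>\<phi> yz\<bar> \<partial>N)" for \<phi> :: "'s \<times> 's \<Rightarrow> real" and N
    by (intro nn_integral_mono ennreal_leI; simp)+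
  have fin: "(\<integral>\<^sup>+ yz. ennreal (G (fst yz)) \<partial>P x) < \<infinity>" "(\<integral>\<^sup>+ yz. ennreal (G (snd yz)) \<partial>P x) < \<infinity>"
    "(\<integral>\<^sup>+ yz. ennreal (- G (fst yz)) \<partial>P x) < \<infinity>" "(\<integral>\<^sup>+ yz. ennreal (- G (snd yz)) \<partial>P x) < \<infinity>"
    using fin1 le_less_trans[OF absb(1)] le_less_trans[OF absb(2)] by auto
  have e2r: "enn2real ((a + b) / 2) = (enn2real a + enn2real b) / 2" if "a < \<infinity>" "b < \<infinity>" for a b :: ennreal
    using that by (cases a rule: ennreal_cases; cases b rule: ennreal_cases)
       (auto simp: ennreal_divide_numeral ennreal_plus[symmetric] simp del: ennreal_plus)
  have "Qop S P G x = enn2real (\<integral>\<^sup>+ y. ennreal (G y) \<partial>Qk S P x) - enn2real (\<integral>\<^sup>+ y. ennreal (- G y) \<partial>Qk S P x)"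
    unfolding Qop_def by (rule real_lebesgue_integral_def[OF iQ])
  also have "\<dots> = (enn2real (\<integral>\<^sup>+ yz. ennreal (G (fst yz)) \<partial>P x) - enn2real (\<integral>\<^sup>+ yz. ennreal (- G (fst yz)) \<partial>P x)
      + (enn2real (\<integral>\<^sup>+ yz. ennreal (G (snd yz)) \<partial>P x) - enn2real (\<integral>\<^sup>+ yz. ennreal (- G (snd yz)) \<partial>P x))) / 2"
    using fin by (simp add: Qk_nn[OF x] e2r diff_divide_distrib add_divide_distrib)
  also have "\<dots> = (Pop2 P (\<lambda>yz. G (fst yz)) x + Pop2 P (\<lambda>yz. G (snd yz)) x) / 2"
    unfolding Pop2_def real_lebesgue_integral_def[OF i1] real_lebesgue_integral_def[OF i2] ..
  finally show "Qop S P G x = (Pop2 P (\<lambda>yz. G (fst yz)) x + Pop2 P (\<lambda>yz. G (snd yz)) x) / 2" .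
qed


lemma Qop_cong: "(\<And>y. y \<in> space S \<Longrightarrow> H y = H' y) \<Longrightarrow> Qop S P H x = Qop S P H' x"
  unfolding Qop_def by (intro Bochner_Integration.integral_cong) auto

lemma Qop_nonneg: "(\<And>y. y \<in> space S \<Longrightarrow> 0 \<le> H y) \<Longrightarrow> 0 \<le> Qop S P H x"
  unfolding Qop_def by (intro integral_nonneg_AE) auto

lemma Qp_mono: "(\<And>y. y \<in> space S \<Longrightarrow> H y \<le> H' y) \<Longrightarrow> Qp H x \<le> Qp H' x"
  unfolding Qp_def by (intro nn_integral_mono) auto

lemma Qp_pow_mono: "(\<And>y. y \<in> space S \<Longrightarrow> H y \<le> H' y) \<Longrightarrow> x \<in> space S \<Longrightarrow> (Qp ^^ m) H x \<le> (Qp ^^ m) H' x"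
proof (induct m arbitrary: x)
  case (Suc m) then show ?case by (simp add: Qp_mono)
qed simp

end

locale fl = bmcl S P M \<nu> X for S :: "'s measure" and P M \<nu> X +
  fixes F :: "('s \<Rightarrow> real) set"
  assumes Fa: "assumption_F S \<nu> P F" and nu_sets: "sets \<nu> = sets S" and nu_prob: "prob_space \<nu>"
begin

lemma F_meas: "G \<in> F \<Longrightarrow> G \<in> borel_measurable S"
  using Fa by (auto simp: assumption_F_def)

lemma F_add: "G \<in> F \<Longrightarrow> H \<in> F \<Longrightarrow> (\<lambda>x. G x + H x) \<in> F"
  using Fa by (auto simp: assumption_F_def)

lemma F_cmult: "G \<in> F \<Longrightarrow> (\<lambda>x. c * G x) \<in> F"
  using Fa by (auto simp: assumption_F_def)

lemma F_const: "(\<lambda>_. c) \<in> F"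
  using Fa by (auto simp: assumption_F_def)

lemma F_sq: "G \<in> F \<Longrightarrow> (\<lambda>x. (G x)\<^sup>2) \<in> F"
  using Fa by (auto simp: assumption_F_def)

lemma F_nu: "G \<in> F \<Longrightarrow> integrable \<nu> G"
  using Fa by (auto simp: assumption_F_def)

lemma F_P:
  assumes G: "G \<in> F"
  shows "\<And>x. x \<in> space S \<Longrightarrow> integrable (P x) (\<lambda>yz. G (fst yz))"
    "\<And>x. x \<in> space S \<Longrightarrow> integrable (P x) (\<lambda>yz. G (snd yz))"
    "Pop2 P (\<lambda>yz. G (fst yz)) \<in> F" "Pop2 P (\<lambda>yz. G (snd yz)) \<in> F"
proof -
  have c: "(\<lambda>_. 1) \<in> F" by (rule F_const)
  have iv: "\<forall>f0\<in>F. \<forall>f1\<in>F. (\<forall>x\<in>space S. integrable (P x) (\<lambda>yz. f0 (fst yz) * f1 (snd yz))) \<and>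
        Pop2 P (\<lambda>yz. f0 (fst yz) * f1 (snd yz)) \<in> F"
    using Fa by (simp add: assumption_F_def)
  from iv[rule_format, OF G c] iv[rule_format, OF c G]
  show "\<And>x. x \<in> space S \<Longrightarrow> integrable (P x) (\<lambda>yz. G (fst yz))"
    "\<And>x. x \<in> space S \<Longrightarrow> integrable (P x) (\<lambda>yz. G (snd yz))"
    "Pop2 P (\<lambda>yz. G (fst yz)) \<in> F" "Pop2 P (\<lambda>yz. G (snd yz)) \<in> F" by simp_all
qed

lemma QF: assumes G: "G \<in> F" shows "\<exists>G'\<in>F. \<forall>x\<in>space S. Qop S P G x = G' x"
proof (intro bexI ballI)
  show "(\<lambda>x. (1/2) * (Pop2 P (\<lambda>yz. G (fst yz)) x + Pop2 P (\<lambda>yz. G (snd yz)) x)) \<in> F"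
    using F_P[OF G] by (intro F_cmult F_add)
  fix x assume x: "x \<in> space S"
  show "Qop S P G x = (1/2) * (Pop2 P (\<lambda>yz. G (fst yz)) x + Pop2 P (\<lambda>yz. G (snd yz)) x)"
    using Qk_int(2)[OF x F_meas[OF G] F_P(1,2)[OF G x]] by simp
qed

lemma Qpow_F: assumes G: "G \<in> F" shows "\<exists>G'\<in>F. \<forall>x\<in>space S. (Qop S P ^^ m) G x = G' x"
proof (induct m)
  case 0 then show ?case using G by auto
next
  case (Suc m)
  then obtain G' where G': "G' \<in> F" "\<forall>x\<in>space S. (Qop S P ^^ m) G x = G' x" by auto
  obtain G'' where G'': "G'' \<in> F" "\<forall>x\<in>space S. Qop S P G' x = G'' x" using QF[OF G'(1)] by auto
  show ?case
  proof (intro bexI[OF _ G''(1)] ballI)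
    fix x assume "x \<in> space S"
    have "(Qop S P ^^ Suc m) G x = Qop S P G' x" unfolding funpow.simps comp_def by (rule Qop_cong) (use G'(2) in auto)
    then show "(Qop S P ^^ Suc m) G x = G'' x" using G''(2) \<open>x \<in> space S\<close> by simp
  qed
qed

lemma Qpow_meas: assumes G: "G \<in> F" shows "(Qop S P ^^ m) G \<in> borel_measurable S"
proof -
  obtain G' where G': "G' \<in> F" "\<forall>x\<in>space S. (Qop S P ^^ m) G x = G' x" using Qpow_F[OF G] by auto
  show ?thesis using F_meas[OF G'(1)] by (rule measurable_cong[THEN iffD1, rotated]) (use G'(2) in auto)
qed

lemma Qpow_int: assumes G: "G \<in> F" and x: "x \<in> space S"
  shows "integrable (Qk S P x) ((Qop S P ^^ m) G)"
proof -
  obtain G' where G': "G' \<in> F" "\<forall>x\<in>space S. (Qop S P ^^ m) G x = G' x" using Qpow_F[OF G] by auto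
  have "integrable (Qk S P x) G'" using Qk_int(1)[OF x F_meas[OF G'(1)] F_P(1,2)[OF G'(1) x]] .
  moreover have "integrable (Qk S P x) G' \<longleftrightarrow> integrable (Qk S P x) ((Qop S P ^^ m) G)"
    by (rule Bochner_Integration.integrable_cong) (use G'(2) in auto)
  ultimately show ?thesis by simp
qed

lemma Qp_F:
  assumes G: "G \<in> F" and Gp: "\<And>y. y \<in> space S \<Longrightarrow> 0 \<le> G y"
  shows "\<forall>x\<in>space S. (Qp ^^ m) (\<lambda>y. ennreal (G y)) x = ennreal ((Qop S P ^^ m) G x) \<and> 0 \<le> (Qop S P ^^ m) G x"
proof (induct m)
  case 0 then show ?case using Gp by simp
next
  case (Suc m)
  show ?case
  proof
    fix x assume x: "x \<in> space S"
    have "(Qp ^^ Suc m) (\<lambda>y. ennreal (G y)) x = (\<integral>\<^sup>+ y. (Qp ^^ m) (\<lambda>y. ennreal (G y)) y \<partial>Qk S P x)"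
      by (simp add: Qp_def)
    also have "\<dots> = (\<integral>\<^sup>+ y. ennreal ((Qop S P ^^ m) G y) \<partial>Qk S P x)"
      using Suc by (intro nn_integral_cong) auto
    also have "\<dots> = ennreal ((Qop S P ^^ Suc m) G x)"
      unfolding funpow.simps comp_def Qop_def[of _ _ "(Qop S P ^^ m) G"]
      using Suc Qpow_int[OF G x] by (intro nn_integral_eq_integral) auto
    finally show "(Qp ^^ Suc m) (\<lambda>y. ennreal (G y)) x = ennreal ((Qop S P ^^ Suc m) G x) \<and> 0 \<le> (Qop S P ^^ Suc m) G x"
      using Suc by (auto intro!: Qop_nonneg)
  qed
qed


lemma Qp_real:
  assumes h[measurable]: "h \<in> borel_measurable S" and hf: "\<And>y. y \<in> space S \<Longrightarrow> h y < \<top>"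
    and x: "x \<in> space S" and Qf: "Qp h x < \<top>"
  shows "integrable (Qk S P x) (\<lambda>y. enn2real (h y))" "Qop S P (\<lambda>y. enn2real (h y)) x = enn2real (Qp h x)"
proof -
  have e: "(\<integral>\<^sup>+ y. ennreal (enn2real (h y)) \<partial>Qk S P x) = Qp h x"
    unfolding Qp_def using hf by (intro nn_integral_cong) (simp add: less_top)
  show "integrable (Qk S P x) (\<lambda>y. enn2real (h y))"
    by (rule integrableI_bounded) (use e Qf in auto)
  show "Qop S P (\<lambda>y. enn2real (h y)) x = enn2real (Qp h x)"
    unfolding Qop_def by (subst integral_eq_nn_integral) (auto simp: e)
qed

lemma Qop_split:
  assumes f[measurable]: "f \<in> borel_measurable S" and g: "g \<in> F" and fg: "\<And>y. y \<in> space S \<Longrightarrow> \<bar>f y\<bar> \<le> g y"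
  shows "\<forall>x\<in>space S. (Qp ^^ m) (\<lambda>y. ennreal (max (f y) 0)) x \<le> ennreal ((Qop S P ^^ m) g x)
     \<and> (Qp ^^ m) (\<lambda>y. ennreal (max (- f y) 0)) x \<le> ennreal ((Qop S P ^^ m) g x)
     \<and> (Qop S P ^^ m) f x = enn2real ((Qp ^^ m) (\<lambda>y. ennreal (max (f y) 0)) x) - enn2real ((Qp ^^ m) (\<lambda>y. ennreal (max (- f y) 0)) x)"
proof -
  define fp where "fp = (\<lambda>y. ennreal (max (f y) 0))"
  define fm where "fm = (\<lambda>y. ennreal (max (- f y) 0))"
  have [measurable]: "fp \<in> borel_measurable S" "fm \<in> borel_measurable S" unfolding fp_def fm_def by measurable
  have gp: "\<And>y. y \<in> space S \<Longrightarrow> 0 \<le> g y" using fg abs_ge_zero order_trans by blast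
  note QF = Qp_F[OF g gp]
  have bnd: "(Qp ^^ m) fp x \<le> ennreal ((Qop S P ^^ m) g x) \<and> (Qp ^^ m) fm x \<le> ennreal ((Qop S P ^^ m) g x)"
    if x: "x \<in> space S" for x m
  proof -
    have "(Qp ^^ m) fp x \<le> (Qp ^^ m) (\<lambda>y. ennreal (g y)) x" "(Qp ^^ m) fm x \<le> (Qp ^^ m) (\<lambda>y. ennreal (g y)) x"
      using fg x by (auto intro!: Qp_pow_mono ennreal_leI simp: fp_def fm_def abs_le_iff)
    then show ?thesis using QF x by auto
  qed
  have fin: "(Qp ^^ m) fp x < \<top>" "(Qp ^^ m) fm x < \<top>" if x: "x \<in> space S" for x m
    using bnd[OF x, of m] by (auto intro: le_less_trans)
  have eq: "(Qop S P ^^ m) f x = enn2real ((Qp ^^ m) fp x) - enn2real ((Qp ^^ m) fm x)" if "x \<in> space S" for x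
    using that
  proof (induct m arbitrary: x)
    case 0
    then show ?case by (cases "0 \<le> f x") (auto simp: fp_def fm_def ennreal_neg)
  next
    case (Suc m)
    have x: "x \<in> space S" by fact
    have "(Qop S P ^^ Suc m) f x = Qop S P (\<lambda>y. enn2real ((Qp ^^ m) fp y) - enn2real ((Qp ^^ m) fm y)) x"
      unfolding funpow.simps comp_def by (rule Qop_cong) (use Suc.hyps in auto)
    also have "\<dots> = Qop S P (\<lambda>y. enn2real ((Qp ^^ m) fp y)) x - Qop S P (\<lambda>y. enn2real ((Qp ^^ m) fm y)) x"
      unfolding Qop_def
      by (rule Bochner_Integration.integral_diff; rule Qp_real(1)) (use fin x fin[of x "Suc m"] in auto)
    also have "\<dots> = enn2real ((Qp ^^ Suc m) fp x) - enn2real ((Qp ^^ Suc m) fm x)"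
      using Qp_real(2)[of "(Qp ^^ m) fp" x] Qp_real(2)[of "(Qp ^^ m) fm" x] fin x fin[of x "Suc m"] by auto
    finally show ?case .
  qed
  show ?thesis using bnd eq unfolding fp_def fm_def by auto
qed


lemma nu_space: "space \<nu> = space S" using sets_eq_imp_space_eq[OF nu_sets] .

lemma F_nu_fin: assumes "G \<in> F" shows "(\<integral>\<^sup>+ x. ennreal (G x) \<partial>\<nu>) < \<top>"
proof -
  have "(\<integral>\<^sup>+ x. ennreal (G x) \<partial>\<nu>) \<le> (\<integral>\<^sup>+ x. ennreal (norm (G x)) \<partial>\<nu>)"
    by (intro nn_integral_mono ennreal_leI) auto
  also have "\<dots> < \<top>" using F_nu[OF assms] by (simp add: integrable_iff_bounded)
  finally show ?thesis .
qed

lemma E_Gen: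
  assumes h[measurable]: "h \<in> borel_measurable S"
  shows "(\<integral>\<^sup>+ \<omega>. (\<Sum>j\<in>Gen n. h (X j \<omega>)) \<partial>M) = 2 ^ n * (\<integral>\<^sup>+ x. (Qp ^^ n) h x \<partial>\<nu>)"
proof -
  have A: "space M \<in> sets (hist M S X 0)" using sets.top[of "hist M S X 0"] by simp
  have "(\<integral>\<^sup>+ \<omega>. (\<Sum>j\<in>Gen n. h (X j \<omega>)) \<partial>M) = (\<integral>\<^sup>+ \<omega>. indicator (space M) \<omega> * (\<Sum>j\<in>Gen n. h (X ([] @ j) \<omega>)) \<partial>M)"
    by (intro nn_integral_cong) simp
  also have "\<dots> = (\<integral>\<^sup>+ \<omega>. indicator (space M) \<omega> * (2 ^ n * (Qp ^^ n) h (X [] \<omega>)) \<partial>M)"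
    by (rule many_nn) (use A in auto)
  also have "\<dots> = (\<integral>\<^sup>+ \<omega>. 2 ^ n * (Qp ^^ n) h (X [] \<omega>) \<partial>M)"
    by (intro nn_integral_cong) simp
  also have "\<dots> = 2 ^ n * (\<integral>\<^sup>+ \<omega>. (Qp ^^ n) h (X [] \<omega>) \<partial>M)"
    by (rule nn_integral_cmult) measurable
  also have "(\<integral>\<^sup>+ \<omega>. (Qp ^^ n) h (X [] \<omega>) \<partial>M) = (\<integral>\<^sup>+ x. (Qp ^^ n) h x \<partial>distr M S (X []))"
    by (rule nn_integral_distr[symmetric]) measurable
  also have "distr M S (X []) = \<nu>" using bmc by (simp add: BMC_def)
  finally show ?thesis .
qed

lemma int_G:
  assumes G: "G \<in> F" and Gp: "\<And>y. y \<in> space S \<Longrightarrow> 0 \<le> G y"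
  shows "integrable M (\<lambda>\<omega>. G (X j \<omega>))"
proof -
  have [measurable]: "G \<in> borel_measurable S" by (rule F_meas[OF G])
  define n where "n = length j"
  have jG: "j \<in> Gen n" by (simp add: Gen_def n_def)
  obtain G' where G': "G' \<in> F" "\<forall>x\<in>space S. (Qop S P ^^ n) G x = G' x" using Qpow_F[OF G] by auto
  have "(\<integral>\<^sup>+ \<omega>. ennreal (norm (G (X j \<omega>))) \<partial>M) = (\<integral>\<^sup>+ \<omega>. ennreal (G (X j \<omega>)) \<partial>M)"
    using Gp X_space by (intro nn_integral_cong) auto
  also have "\<dots> \<le> (\<integral>\<^sup>+ \<omega>. (\<Sum>j\<in>Gen n. ennreal (G (X j \<omega>))) \<partial>M)"
    by (intro nn_integral_mono member_le_sum[OF jG]) auto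
  also have "\<dots> = 2 ^ n * (\<integral>\<^sup>+ x. (Qp ^^ n) (\<lambda>y. ennreal (G y)) x \<partial>\<nu>)"
    by (rule E_Gen) measurable
  also have "(\<integral>\<^sup>+ x. (Qp ^^ n) (\<lambda>y. ennreal (G y)) x \<partial>\<nu>) = (\<integral>\<^sup>+ x. ennreal (G' x) \<partial>\<nu>)"
    using Qp_F[OF G Gp] G'(2) by (intro nn_integral_cong) (auto simp: nu_space)
  also have "2 ^ n * (\<integral>\<^sup>+ x. ennreal (G' x) \<partial>\<nu>) < \<top>"
    using F_nu_fin[OF G'(1)] by (simp add: ennreal_mult_less_top power_less_top_ennreal)
  finally show ?thesis by (intro integrableI_bounded) auto
qed


lemma ennreal_sum_max: "ennreal (\<Sum>j\<in>J. max (\<phi> j) 0) = (\<Sum>j\<in>J. ennreal (\<phi> j :: real))"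
  by (subst sum_ennreal[symmetric]) auto

lemma nn_real_eq:
  fixes u v :: "_ \<Rightarrow> real"
  assumes "integrable M u" "integrable M v" "\<And>\<omega>. 0 \<le> u \<omega>" "\<And>\<omega>. 0 \<le> v \<omega>"
    and "(\<integral>\<^sup>+ \<omega>. ennreal (u \<omega>) \<partial>M) = (\<integral>\<^sup>+ \<omega>. ennreal (v \<omega>) \<partial>M)"
  shows "(\<integral> \<omega>. u \<omega> \<partial>M) = (\<integral> \<omega>. v \<omega> \<partial>M)"
proof -
  have "ennreal (\<integral> \<omega>. u \<omega> \<partial>M) = ennreal (\<integral> \<omega>. v \<omega> \<partial>M)"
    using assms by (simp add: nn_integral_eq_integral[symmetric])
  then show ?thesis using assms by (simp add: integral_nonneg_AE)
qed

lemma many_real: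
  assumes f[measurable]: "f \<in> borel_measurable S" and g: "g \<in> F" and fg: "\<And>y. y \<in> space S \<Longrightarrow> \<bar>f y\<bar> \<le> g y"
    and i: "length i = k" and A: "A \<in> sets (hist M S X k)"
  shows "integrable M (\<lambda>\<omega>. (Qop S P ^^ m) f (X i \<omega>))"
    "(\<integral> \<omega>. indicator A \<omega> * (\<Sum>j\<in>Gen m. f (X (i @ j) \<omega>)) \<partial>M)
     = (\<integral> \<omega>. indicator A \<omega> * (2 ^ m * (Qop S P ^^ m) f (X i \<omega>)) \<partial>M)"
proof -
  have AM[measurable]: "A \<in> sets M" using A hist_subM by auto
  have gp: "\<And>y. y \<in> space S \<Longrightarrow> 0 \<le> g y" using fg abs_ge_zero order_trans by blast
  have [measurable]: "g \<in> borel_measurable S" by (rule F_meas[OF g])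
  define fp where "fp = (\<lambda>y. ennreal (max (f y) 0))"
  define fm where "fm = (\<lambda>y. ennreal (max (- f y) 0))"
  have [measurable]: "fp \<in> borel_measurable S" "fm \<in> borel_measurable S" unfolding fp_def fm_def by measurable
  note split = Qop_split[OF f g fg, of m, folded fp_def fm_def]
  obtain G' where G': "G' \<in> F" "\<forall>x\<in>space S. (Qop S P ^^ m) g x = G' x" using Qpow_F[OF g] by auto
  have G'p: "0 \<le> G' y" if "y \<in> space S" for y using Qp_F[OF g gp, of m] G'(2) that by auto
  have iG': "integrable M (\<lambda>\<omega>. G' (X i \<omega>))" by (rule int_G[OF G'(1) G'p])
  have [measurable]: "G' \<in> borel_measurable S" by (rule F_meas[OF G'(1)])
  have ig: "integrable M (\<lambda>\<omega>. g (X j \<omega>))" for j by (rule int_G[OF g gp])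
  have fin: "(Qp ^^ m) fp x < \<top>" "(Qp ^^ m) fm x < \<top>" if "x \<in> space S" for x
    using split that G'(2) by (auto intro: le_less_trans)
  have p2: "ennreal (2 ^ m) = 2 ^ m" by (simp add: ennreal_power[symmetric])
  define ap where "ap \<omega> = enn2real ((Qp ^^ m) fp (X i \<omega>))" for \<omega>
  define bp where "bp \<omega> = enn2real ((Qp ^^ m) fm (X i \<omega>))" for \<omega>
  have [measurable]: "ap \<in> borel_measurable M" "bp \<in> borel_measurable M" unfolding ap_def bp_def by measurable
  have iap: "integrable M ap"
  proof (rule Bochner_Integration.integrable_bound[OF iG'])
    show "AE x in M. norm (ap x) \<le> norm (G' (X i x))"
      using split X_space G'(2) G'p fin by (auto simp: ap_def enn2real_leI)
  qed simp
  have ibp: "integrable M bp"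
  proof (rule Bochner_Integration.integrable_bound[OF iG'])
    show "AE x in M. norm (bp x) \<le> norm (G' (X i x))"
      using split X_space G'(2) G'p fin by (auto simp: bp_def enn2real_leI)
  qed simp
  have iap2: "integrable M (\<lambda>\<omega>. 2 ^ m * ap \<omega>)" using iap by auto
  have ibp2: "integrable M (\<lambda>\<omega>. 2 ^ m * bp \<omega>)" using ibp by auto
  have Qeq: "(Qop S P ^^ m) f (X i \<omega>) = ap \<omega> - bp \<omega>" if "\<omega> \<in> space M" for \<omega>
    using split X_space[OF that] by (simp add: ap_def bp_def)
  show iQ: "integrable M (\<lambda>\<omega>. (Qop S P ^^ m) f (X i \<omega>))"
  proof -
    have "integrable M (\<lambda>\<omega>. ap \<omega> - bp \<omega>)" using iap ibp by auto
    moreover have "integrable M (\<lambda>\<omega>. ap \<omega> - bp \<omega>) \<longleftrightarrow> integrable M (\<lambda>\<omega>. (Qop S P ^^ m) f (X i \<omega>))"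
      by (rule Bochner_Integration.integrable_cong) (auto simp: Qeq)
    ultimately show ?thesis by simp
  qed
  have fg2: "f y \<le> \<bar>g y\<bar> \<and> - f y \<le> \<bar>g y\<bar>" if "y \<in> space S" for y
    using fg[OF that] by auto
  define a where "a \<omega> = (\<Sum>j\<in>Gen m. max (f (X (i @ j) \<omega>)) 0)" for \<omega>
  define b where "b \<omega> = (\<Sum>j\<in>Gen m. max (- f (X (i @ j) \<omega>)) 0)" for \<omega>
  have ia: "integrable M a" unfolding a_def
  proof (rule Bochner_Integration.integrable_sum)
    fix j assume "j \<in> Gen m" show "integrable M (\<lambda>\<omega>. max (f (X (i @ j) \<omega>)) 0)"
      by (rule Bochner_Integration.integrable_bound[OF ig[of "i @ j"]]) (use fg2 X_space in auto)
  qed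
  have ib: "integrable M b" unfolding b_def
  proof (rule Bochner_Integration.integrable_sum)
    fix j assume "j \<in> Gen m" show "integrable M (\<lambda>\<omega>. max (- f (X (i @ j) \<omega>)) 0)"
      by (rule Bochner_Integration.integrable_bound[OF ig[of "i @ j"]]) (use fg2 X_space in auto)
  qed
  have eqa: "(\<integral> \<omega>. indicator A \<omega> * a \<omega> \<partial>M) = (\<integral> \<omega>. indicator A \<omega> * (2 ^ m * ap \<omega>) \<partial>M)"
  proof (rule nn_real_eq)
    show "integrable M (\<lambda>\<omega>. indicator A \<omega> * a \<omega>)" using integrable_mult_indicator[OF AM ia] by simp
    show "integrable M (\<lambda>\<omega>. indicator A \<omega> * (2 ^ m * ap \<omega>))" using integrable_mult_indicator[OF AM iap2] by simp
    show "0 \<le> indicator A \<omega> * a \<omega>" for \<omega> unfolding a_def by (intro mult_nonneg_nonneg sum_nonneg) auto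
    show "0 \<le> indicator A \<omega> * (2 ^ m * ap \<omega>)" for \<omega> by (auto simp: ap_def)
    have "(\<integral>\<^sup>+ \<omega>. ennreal (indicator A \<omega> * a \<omega>) \<partial>M) = (\<integral>\<^sup>+ \<omega>. indicator A \<omega> * (\<Sum>j\<in>Gen m. fp (X (i @ j) \<omega>)) \<partial>M)"
      by (intro nn_integral_cong) (auto simp: a_def fp_def indicator_def ennreal_sum_max ennreal_mult')
    also have "\<dots> = (\<integral>\<^sup>+ \<omega>. indicator A \<omega> * (2 ^ m * (Qp ^^ m) fp (X i \<omega>)) \<partial>M)"
      by (rule many_nn[OF i _ A]) measurable
    also have "\<dots> = (\<integral>\<^sup>+ \<omega>. ennreal (indicator A \<omega> * (2 ^ m * ap \<omega>)) \<partial>M)"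
      using fin X_space by (intro nn_integral_cong) (auto simp: ap_def indicator_def ennreal_mult' less_top p2)
    finally show "(\<integral>\<^sup>+ \<omega>. ennreal (indicator A \<omega> * a \<omega>) \<partial>M) = (\<integral>\<^sup>+ \<omega>. ennreal (indicator A \<omega> * (2 ^ m * ap \<omega>)) \<partial>M)" .
  qed
  have eqb: "(\<integral> \<omega>. indicator A \<omega> * b \<omega> \<partial>M) = (\<integral> \<omega>. indicator A \<omega> * (2 ^ m * bp \<omega>) \<partial>M)"
  proof (rule nn_real_eq)
    show "integrable M (\<lambda>\<omega>. indicator A \<omega> * b \<omega>)" using integrable_mult_indicator[OF AM ib] by simp
    show "integrable M (\<lambda>\<omega>. indicator A \<omega> * (2 ^ m * bp \<omega>))" using integrable_mult_indicator[OF AM ibp2] by simp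
    show "0 \<le> indicator A \<omega> * b \<omega>" for \<omega> unfolding b_def by (intro mult_nonneg_nonneg sum_nonneg) auto
    show "0 \<le> indicator A \<omega> * (2 ^ m * bp \<omega>)" for \<omega> by (auto simp: bp_def)
    have "(\<integral>\<^sup>+ \<omega>. ennreal (indicator A \<omega> * b \<omega>) \<partial>M) = (\<integral>\<^sup>+ \<omega>. indicator A \<omega> * (\<Sum>j\<in>Gen m. fm (X (i @ j) \<omega>)) \<partial>M)"
      by (intro nn_integral_cong) (auto simp: b_def fm_def indicator_def ennreal_sum_max ennreal_mult')
    also have "\<dots> = (\<integral>\<^sup>+ \<omega>. indicator A \<omega> * (2 ^ m * (Qp ^^ m) fm (X i \<omega>)) \<partial>M)"
      by (rule many_nn[OF i _ A]) measurable
    also have "\<dots> = (\<integral>\<^sup>+ \<omega>. ennreal (indicator A \<omega> * (2 ^ m * bp \<omega>)) \<partial>M)"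
      using fin X_space by (intro nn_integral_cong) (auto simp: bp_def indicator_def ennreal_mult' less_top p2)
    finally show "(\<integral>\<^sup>+ \<omega>. ennreal (indicator A \<omega> * b \<omega>) \<partial>M) = (\<integral>\<^sup>+ \<omega>. ennreal (indicator A \<omega> * (2 ^ m * bp \<omega>)) \<partial>M)" .
  qed
  have "(\<integral> \<omega>. indicator A \<omega> * (\<Sum>j\<in>Gen m. f (X (i @ j) \<omega>)) \<partial>M)
      = (\<integral> \<omega>. indicator A \<omega> * a \<omega> - indicator A \<omega> * b \<omega> \<partial>M)"
  proof (intro Bochner_Integration.integral_cong refl)
    fix \<omega> have "(\<Sum>j\<in>Gen m. f (X (i @ j) \<omega>)) = a \<omega> - b \<omega>"
      unfolding a_def b_def sum_subtractf[symmetric] by (intro sum.cong) auto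
    then show "indicator A \<omega> * (\<Sum>j\<in>Gen m. f (X (i @ j) \<omega>)) = indicator A \<omega> * a \<omega> - indicator A \<omega> * b \<omega>"
      by (simp add: right_diff_distrib)
  qed
  also have "\<dots> = (\<integral> \<omega>. indicator A \<omega> * a \<omega> \<partial>M) - (\<integral> \<omega>. indicator A \<omega> * b \<omega> \<partial>M)"
    using integrable_mult_indicator[OF AM ia] integrable_mult_indicator[OF AM ib]
    by (intro Bochner_Integration.integral_diff) auto
  also have "\<dots> = (\<integral> \<omega>. indicator A \<omega> * (2 ^ m * ap \<omega>) \<partial>M) - (\<integral> \<omega>. indicator A \<omega> * (2 ^ m * bp \<omega>) \<partial>M)"
    unfolding eqa eqb ..
  also have "\<dots> = (\<integral> \<omega>. indicator A \<omega> * (2 ^ m * ap \<omega>) - indicator A \<omega> * (2 ^ m * bp \<omega>) \<partial>M)"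
    using integrable_mult_indicator[OF AM iap2] integrable_mult_indicator[OF AM ibp2]
    by (intro Bochner_Integration.integral_diff[symmetric]) auto
  also have "\<dots> = (\<integral> \<omega>. indicator A \<omega> * (2 ^ m * (Qop S P ^^ m) f (X i \<omega>)) \<partial>M)"
    by (intro Bochner_Integration.integral_cong refl) (simp add: Qeq right_diff_distrib)
  finally show "(\<integral> \<omega>. indicator A \<omega> * (\<Sum>j\<in>Gen m. f (X (i @ j) \<omega>)) \<partial>M)
     = (\<integral> \<omega>. indicator A \<omega> * (2 ^ m * (Qop S P ^^ m) f (X i \<omega>)) \<partial>M)" .
qed

end


lemma card_Gen: "card (Gen m) = 2 ^ m"
proof -
  have "card {xs. set xs \<subseteq> (UNIV::bool set) \<and> length xs = m} = card (UNIV::bool set) ^ m"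
    by (rule card_lists_length_eq) simp
  moreover have "Gen m = {xs. set xs \<subseteq> UNIV \<and> length xs = m}" by (auto simp: Gen_def)
  ultimately show ?thesis by simp
qed

lemma MA_reindex: "MA X ((\<lambda>j. i @ j) ` G) h \<omega> = (\<Sum>j\<in>G. h (X (i @ j) \<omega>))"
  unfolding MA_def by (subst sum.reindex) (auto simp: inj_on_def)

context fl begin

lemma Qop_f_meas:
  assumes f[measurable]: "f \<in> borel_measurable S" and g: "g \<in> F" and fg: "\<And>y. y \<in> space S \<Longrightarrow> \<bar>f y\<bar> \<le> g y"
  shows "(Qop S P ^^ m) f \<in> borel_measurable S"
proof -
  note split = Qop_split[OF f g fg, of m]
  have "(\<lambda>x. enn2real ((Qp ^^ m) (\<lambda>y. ennreal (max (f y) 0)) x) - enn2real ((Qp ^^ m) (\<lambda>y. ennreal (max (- f y) 0)) x)) \<in> borel_measurable S"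
    by measurable
  then show ?thesis by (rule measurable_cong[THEN iffD1, rotated]) (use split in auto)
qed

lemma condexp_N:
  assumes fm[measurable]: "\<And>l. f l \<in> borel_measurable S" and g: "g \<in> F"
    and fb: "\<And>l x. x \<in> space S \<Longrightarrow> \<bar>f l x\<bar> \<le> g x"
  shows "AE \<omega> in M. real_cond_exp M (vimage_algebra (space M) (X i) S) (Nni \<mu> X f n i) \<omega>
     = (1 / sqrt (2 ^ n)) * (\<Sum>l\<in>{0..n - length i}. 2 ^ (n - length i - l) *
          ((Qop S P ^^ (n - length i - l)) (f l) (X i \<omega>) - (\<integral> y. f l y \<partial>\<mu>)))"
proof -
  define V where "V = vimage_algebra (space M) (X i) S"
  define q where "q = n - length i"
  define c where "c l = (\<integral> y. f l y \<partial>\<mu>)" for l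
  interpret prob_space M by (rule probM)
  have XV[measurable]: "X i \<in> V \<rightarrow>\<^sub>M S" unfolding V_def
    by (rule measurable_vimage_algebra1) (use X_space in auto)
  have Vsub: "sets V \<subseteq> sets (hist M S X (length i))" unfolding V_def by (rule vimage_sub)
  have subV: "subalgebra M V" using Vsub hist_subM by (auto simp: subalgebra_def V_def)
  interpret sigma_finite_subalgebra M V
  proof -
    have "finite_measure_subalgebra M V" by unfold_locales (rule subV)
    then show "sigma_finite_subalgebra M V" by (rule finite_measure_subalgebra_is_sigma_finite)
  qed
  define T where "T l \<omega> = (\<Sum>j\<in>Gen (q - l). f l (X (i @ j) \<omega>)) - 2 ^ (q - l) * c l" for l \<omega>
  define U where "U l \<omega> = 2 ^ (q - l) * ((Qop S P ^^ (q - l)) (f l) (X i \<omega>) - c l)" for l \<omega>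
  have gp: "\<And>y. y \<in> space S \<Longrightarrow> 0 \<le> g y" using fb abs_ge_zero order_trans by blast
  have fb2: "\<bar>f l x\<bar> \<le> \<bar>g x\<bar>" if "x \<in> space S" for l x
    using fb[OF that] abs_ge_self order_trans by blast
  have ig: "integrable M (\<lambda>\<omega>. g (X j \<omega>))" for j by (rule int_G[OF g gp])
  have iS: "integrable M (\<lambda>\<omega>. (\<Sum>j\<in>Gen (q - l). f l (X (i @ j) \<omega>)))" for l
  proof (rule Bochner_Integration.integrable_sum)
    fix j show "integrable M (\<lambda>\<omega>. f l (X (i @ j) \<omega>))"
      by (rule Bochner_Integration.integrable_bound[OF ig[of "i @ j"]]) (use fb2 X_space in auto)
  qed
  have iT: "integrable M (T l)" for l
    using iS[of l] unfolding T_def by auto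
  have iQ: "integrable M (\<lambda>\<omega>. (Qop S P ^^ (q - l)) (f l) (X i \<omega>))" for l
    using many_real(1)[OF fm g fb refl sets.top] .
  have iU: "integrable M (U l)" for l unfolding U_def using iQ[of l] by auto
  have UV[measurable]: "U l \<in> borel_measurable V" for l
  proof -
    have [measurable]: "(Qop S P ^^ (q - l)) (f l) \<in> borel_measurable S" by (rule Qop_f_meas[OF fm g fb])
    show ?thesis unfolding U_def by measurable
  qed
  have TU: "AE \<omega> in M. real_cond_exp M V (T l) \<omega> = U l \<omega>" for l
  proof (rule real_cond_exp_charact[OF _ iT iU UV])
    fix A assume A: "A \<in> sets V"
    then have Ah: "A \<in> sets (hist M S X (length i))" using Vsub by auto
    then have AM[measurable]: "A \<in> sets M" using hist_subM by auto
    have ms: "(\<integral> \<omega>. indicator A \<omega> * (\<Sum>j\<in>Gen (q - l). f l (X (i @ j) \<omega>)) \<partial>M)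
      = (\<integral> \<omega>. indicator A \<omega> * (2 ^ (q - l) * (Qop S P ^^ (q - l)) (f l) (X i \<omega>)) \<partial>M)"
      using many_real(2)[OF fm g fb refl Ah] .
    have i1: "integrable M (\<lambda>\<omega>. indicator A \<omega> * (\<Sum>j\<in>Gen (q - l). f l (X (i @ j) \<omega>)))"
      using integrable_mult_indicator[OF AM iS[of l]] by simp
    have i2: "integrable M (\<lambda>\<omega>. indicator A \<omega> * (2 ^ (q - l) * (Qop S P ^^ (q - l)) (f l) (X i \<omega>)))"
    proof -
      have "integrable M (\<lambda>\<omega>. 2 ^ (q - l) * (Qop S P ^^ (q - l)) (f l) (X i \<omega>))" using iQ[of l] by auto
      from integrable_mult_indicator[OF AM this] show ?thesis by simp
    qed
    have i3: "integrable M (\<lambda>\<omega>. indicator A \<omega> * (2 ^ (q - l) * c l))"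
    proof -
      have "integrable M (\<lambda>\<omega>. 2 ^ (q - l) * c l)" by auto
      from integrable_mult_indicator[OF AM this] show ?thesis by simp
    qed
    have "(\<integral> \<omega>\<in>A. T l \<omega> \<partial>M) = (\<integral> \<omega>. indicator A \<omega> * (\<Sum>j\<in>Gen (q - l). f l (X (i @ j) \<omega>)) - indicator A \<omega> * (2 ^ (q - l) * c l) \<partial>M)"
      unfolding set_lebesgue_integral_def T_def by (simp add: right_diff_distrib)
    also have "\<dots> = (\<integral> \<omega>. indicator A \<omega> * (\<Sum>j\<in>Gen (q - l). f l (X (i @ j) \<omega>)) \<partial>M) - (\<integral> \<omega>. indicator A \<omega> * (2 ^ (q - l) * c l) \<partial>M)"
      using i1 i3 by (rule Bochner_Integration.integral_diff)
    also have "\<dots> = (\<integral> \<omega>. indicator A \<omega> * (2 ^ (q - l) * (Qop S P ^^ (q - l)) (f l) (X i \<omega>)) \<partial>M) - (\<integral> \<omega>. indicator A \<omega> * (2 ^ (q - l) * c l) \<partial>M)"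
      unfolding ms ..
    also have "\<dots> = (\<integral> \<omega>. indicator A \<omega> * (2 ^ (q - l) * (Qop S P ^^ (q - l)) (f l) (X i \<omega>)) - indicator A \<omega> * (2 ^ (q - l) * c l) \<partial>M)"
      using i2 i3 by (rule Bochner_Integration.integral_diff[symmetric])
    also have "\<dots> = (\<integral> \<omega>\<in>A. U l \<omega> \<partial>M)"
      unfolding set_lebesgue_integral_def U_def by (simp add: right_diff_distrib)
    finally show "(\<integral> \<omega>\<in>A. T l \<omega> \<partial>M) = (\<integral> \<omega>\<in>A. U l \<omega> \<partial>M)" .
  qed
  have Neq: "Nni \<mu> X f n i = (\<lambda>\<omega>. (1 / sqrt (2 ^ n)) * (\<Sum>l\<in>{0..q}. T l \<omega>))"
  proof
    fix \<omega>
    have "MA X ((\<lambda>j. i @ j) ` Gen (q - l)) (\<lambda>x. f l x - c l) \<omega> = T l \<omega>" for l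
      unfolding MA_reindex T_def by (simp add: sum_subtractf card_Gen)
    then show "Nni \<mu> X f n i \<omega> = (1 / sqrt (2 ^ n)) * (\<Sum>l\<in>{0..q}. T l \<omega>)"
      unfolding Nni_def q_def[symmetric] c_def[symmetric] by simp
  qed
  have iST: "integrable M (\<lambda>\<omega>. \<Sum>l\<in>{0..q}. T l \<omega>)" using iT by auto
  have "AE \<omega> in M. real_cond_exp M V (Nni \<mu> X f n i) \<omega> = (1 / sqrt (2 ^ n)) * real_cond_exp M V (\<lambda>\<omega>. \<Sum>l\<in>{0..q}. T l \<omega>) \<omega>"
    unfolding Neq using iST by (rule real_cond_exp_cmult)
  moreover have "AE \<omega> in M. real_cond_exp M V (\<lambda>\<omega>. \<Sum>l\<in>{0..q}. T l \<omega>) \<omega> = (\<Sum>l\<in>{0..q}. real_cond_exp M V (T l) \<omega>)"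
    using iT by (rule real_cond_exp_sum)
  moreover have "AE \<omega> in M. \<forall>l\<in>{0..q}. real_cond_exp M V (T l) \<omega> = U l \<omega>"
    by (rule AE_finite_allI) (use TU in auto)
  ultimately show ?thesis
    unfolding V_def[symmetric] q_def[symmetric] c_def[symmetric]
    by eventually_elim (simp add: U_def)
qed


lemma sumg2_bound:
  assumes g: "g \<in> F" and gp: "\<And>y. y \<in> space S \<Longrightarrow> 0 \<le> g y"
    and h: "h \<in> F" and hb: "\<And>k x. x \<in> space S \<Longrightarrow> \<bar>(Qop S P ^^ k) (\<lambda>x. (g x)\<^sup>2) x - c0\<bar> \<le> \<alpha> ^ k * h x"
    and a: "0 \<le> \<alpha>" "\<alpha> \<le> 1"
  shows "(\<integral> \<omega>. (\<Sum>i\<in>Gen k. (g (X i \<omega>))\<^sup>2) \<partial>M) \<le> 2 ^ k * (\<integral> x. \<bar>c0\<bar> + \<bar>h x\<bar> \<partial>\<nu>)"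
proof -
  define G2 where "G2 = (\<lambda>x. (g x)\<^sup>2)"
  have G2F: "G2 \<in> F" unfolding G2_def by (rule F_sq[OF g])
  have G2p: "\<And>y. 0 \<le> G2 y" by (simp add: G2_def)
  have [measurable]: "G2 \<in> borel_measurable S" by (rule F_meas[OF G2F])
  have [measurable]: "h \<in> borel_measurable S" by (rule F_meas[OF h])
  define C where "C = (\<integral> x. \<bar>c0\<bar> + \<bar>h x\<bar> \<partial>\<nu>)"
  interpret nu: prob_space \<nu> by (rule nu_prob)
  have ih: "integrable \<nu> (\<lambda>x. \<bar>c0\<bar> + \<bar>h x\<bar>)" using F_nu[OF h] by auto
  have iS: "integrable M (\<lambda>\<omega>. \<Sum>i\<in>Gen k. G2 (X i \<omega>))"
    using int_G[OF G2F] G2p by auto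
  have b1: "(Qop S P ^^ k) G2 x \<le> \<bar>c0\<bar> + \<bar>h x\<bar>" if "x \<in> space S" for x
  proof -
    have "\<alpha> ^ k * h x \<le> \<alpha> ^ k * \<bar>h x\<bar>" using a by (intro mult_left_mono) auto
    also have "\<dots> \<le> 1 * \<bar>h x\<bar>" using a by (intro mult_right_mono power_le_one) auto
    finally show ?thesis using hb[OF that, of k] unfolding G2_def by auto
  qed
  have "ennreal (\<integral> \<omega>. (\<Sum>i\<in>Gen k. G2 (X i \<omega>)) \<partial>M) = (\<integral>\<^sup>+ \<omega>. ennreal (\<Sum>i\<in>Gen k. G2 (X i \<omega>)) \<partial>M)"
    using iS by (intro nn_integral_eq_integral[symmetric]) (auto intro!: sum_nonneg simp: G2p)
  also have "\<dots> = (\<integral>\<^sup>+ \<omega>. (\<Sum>i\<in>Gen k. ennreal (G2 (X i \<omega>))) \<partial>M)"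
    by (intro nn_integral_cong) (simp add: G2p)
  also have "\<dots> = 2 ^ k * (\<integral>\<^sup>+ x. (Qp ^^ k) (\<lambda>y. ennreal (G2 y)) x \<partial>\<nu>)"
    by (rule E_Gen) measurable
  also have "(\<integral>\<^sup>+ x. (Qp ^^ k) (\<lambda>y. ennreal (G2 y)) x \<partial>\<nu>) \<le> (\<integral>\<^sup>+ x. ennreal (\<bar>c0\<bar> + \<bar>h x\<bar>) \<partial>\<nu>)"
    using Qp_F[OF G2F G2p, of k] b1 by (intro nn_integral_mono) (auto simp: nu_space ennreal_plus[symmetric] ennreal_leI simp del: ennreal_plus)
  also have "(\<integral>\<^sup>+ x. ennreal (\<bar>c0\<bar> + \<bar>h x\<bar>) \<partial>\<nu>) = ennreal C"
    unfolding C_def using ih by (intro nn_integral_eq_integral) auto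
  finally have "ennreal (\<integral> \<omega>. (\<Sum>i\<in>Gen k. G2 (X i \<omega>)) \<partial>M) \<le> 2 ^ k * ennreal C"
    by (simp add: mult_left_mono)
  also have "\<dots> = ennreal (2 ^ k * C)" by (simp add: ennreal_mult' ennreal_power[symmetric])
  finally have "ennreal (\<integral> \<omega>. (\<Sum>i\<in>Gen k. G2 (X i \<omega>)) \<partial>M) \<le> ennreal (2 ^ k * C)" .
  moreover have "0 \<le> C" unfolding C_def by (intro integral_nonneg_AE) auto
  ultimately show ?thesis unfolding C_def[symmetric] G2_def by (simp add: ennreal_le_iff)
qed


lemma R2_bound:
  assumes fm[measurable]: "\<And>l. f l \<in> borel_measurable S" and g: "g \<in> F"
    and fb: "\<And>l x. x \<in> space S \<Longrightarrow> \<bar>f l x\<bar> \<le> g x"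
    and fgeom: "\<And>m l x. x \<in> space S \<Longrightarrow> \<bar>(Qop S P ^^ m) (f l) x - (\<integral> y. f l y \<partial>\<mu>)\<bar> \<le> \<alpha> ^ m * g x"
    and a: "0 \<le> \<alpha>"
    and C: "\<And>k. (\<integral> \<omega>. (\<Sum>i\<in>Gen k. (g (X i \<omega>))\<^sup>2) \<partial>M) \<le> 2 ^ k * C"
    and pn: "p n \<le> n"
  shows "(\<integral> \<omega>. R2 M S \<mu> X f p n \<omega> \<partial>M) \<le> C * (real (p n) + 1)\<^sup>2 * ((max (2*\<alpha>) 1)\<^sup>2 / 2) ^ p n"
proof -
  define q where "q = p n"
  define k where "k = n - q"
  define \<theta> where "\<theta> = max (2*\<alpha>) 1"
  define K where "K = (real q + 1)\<^sup>2 * \<theta> ^ (2*q) / 2 ^ n"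
  define c where "c l = (\<integral> y. f l y \<partial>\<mu>)" for l
  define Y where "Y i \<omega> = (1 / sqrt (2 ^ n)) * (\<Sum>l\<in>{0..q}. 2 ^ (q - l) * ((Qop S P ^^ (q - l)) (f l) (X i \<omega>) - c l))" for i \<omega>
  have nk: "n = k + q" using pn by (simp add: k_def q_def)
  have th1: "1 \<le> \<theta>" by (simp add: \<theta>_def)
  have gp: "\<And>y. y \<in> space S \<Longrightarrow> 0 \<le> g y" using fb abs_ge_zero order_trans by blast
  have [measurable]: "g \<in> borel_measurable S" by (rule F_meas[OF g])
  have Qm[measurable]: "(Qop S P ^^ m) (f l) \<in> borel_measurable S" for m l by (rule Qop_f_meas[OF fm g fb])
  have Ym[measurable]: "Y i \<in> borel_measurable M" for i unfolding Y_def by measurable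
  have AE1: "AE \<omega> in M. \<forall>i\<in>Gen k. real_cond_exp M (vimage_algebra (space M) (X i) S) (Nni \<mu> X f n i) \<omega> = Y i \<omega>"
  proof (rule AE_finite_allI)
    fix i assume "i \<in> Gen k"
    then have "n - length i = q" using nk by (simp add: Gen_def)
    then show "AE \<omega> in M. real_cond_exp M (vimage_algebra (space M) (X i) S) (Nni \<mu> X f n i) \<omega> = Y i \<omega>"
      using condexp_N[OF fm g fb, where \<mu>=\<mu> and n=n and i=i] by (simp add: Y_def c_def)
  qed simp
  have Yb: "(Y i \<omega>)\<^sup>2 \<le> K * (g (X i \<omega>))\<^sup>2" if \<omega>: "\<omega> \<in> space M" for i \<omega>
  proof -
    have x: "X i \<omega> \<in> space S" using X_space[OF \<omega>] .
    have t: "\<bar>2 ^ (q - l) * ((Qop S P ^^ (q - l)) (f l) (X i \<omega>) - c l)\<bar> \<le> \<theta> ^ q * g (X i \<omega>)" if "l \<in> {0..q}" for l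
    proof -
      have "\<bar>2 ^ (q - l) * ((Qop S P ^^ (q - l)) (f l) (X i \<omega>) - c l)\<bar> \<le> 2 ^ (q - l) * (\<alpha> ^ (q - l) * g (X i \<omega>))"
        using fgeom[OF x, of "q - l" l] by (simp add: abs_mult c_def)
      also have "\<dots> = (2 * \<alpha>) ^ (q - l) * g (X i \<omega>)" by (simp add: power_mult_distrib)
      also have "\<dots> \<le> \<theta> ^ (q - l) * g (X i \<omega>)"
        using gp[OF x] a by (intro mult_right_mono power_mono) (auto simp: \<theta>_def)
      also have "\<dots> \<le> \<theta> ^ q * g (X i \<omega>)"
        using gp[OF x] th1 by (intro mult_right_mono power_increasing) auto
      finally show ?thesis .
    qed
    have "\<bar>\<Sum>l\<in>{0..q}. 2 ^ (q - l) * ((Qop S P ^^ (q - l)) (f l) (X i \<omega>) - c l)\<bar> \<le> (\<Sum>l\<in>{0..q}. \<theta> ^ q * g (X i \<omega>))"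
      using t by (intro order_trans[OF sum_abs sum_mono]) auto
    also have "\<dots> = (real q + 1) * \<theta> ^ q * g (X i \<omega>)" by simp
    finally have sb: "\<bar>\<Sum>l\<in>{0..q}. 2 ^ (q - l) * ((Qop S P ^^ (q - l)) (f l) (X i \<omega>) - c l)\<bar> \<le> (real q + 1) * \<theta> ^ q * g (X i \<omega>)" .
    have "(Y i \<omega>)\<^sup>2 = (1 / 2 ^ n) * (\<bar>\<Sum>l\<in>{0..q}. 2 ^ (q - l) * ((Qop S P ^^ (q - l)) (f l) (X i \<omega>) - c l)\<bar>)\<^sup>2"
      by (simp add: Y_def power_mult_distrib power_divide)
    also have "\<dots> \<le> (1 / 2 ^ n) * ((real q + 1) * \<theta> ^ q * g (X i \<omega>))\<^sup>2"
      using sb by (intro mult_left_mono power_mono) auto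
    also have "\<dots> = K * (g (X i \<omega>))\<^sup>2"
      by (simp add: K_def power_mult_distrib power_mult[symmetric] mult.commute)
    finally show ?thesis .
  qed
  have tsq: "(\<theta> ^ q)\<^sup>2 = (\<theta>\<^sup>2) ^ q" by (simp add: power_mult[symmetric] mult.commute)
  have K0: "0 \<le> K" by (simp add: K_def)
  have ig2: "integrable M (\<lambda>\<omega>. (g (X i \<omega>))\<^sup>2)" for i
    using int_G[OF F_sq[OF g]] by simp
  have iY: "integrable M (\<lambda>\<omega>. (Y i \<omega>)\<^sup>2)" for i
  proof (rule Bochner_Integration.integrable_bound)
    show "integrable M (\<lambda>\<omega>. K * (g (X i \<omega>))\<^sup>2)" using ig2[of i] by auto
    show "AE \<omega> in M. norm ((Y i \<omega>)\<^sup>2) \<le> norm (K * (g (X i \<omega>))\<^sup>2)"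
      using Yb K0 by (auto simp: abs_mult)
  qed simp
  have "(\<integral> \<omega>. R2 M S \<mu> X f p n \<omega> \<partial>M) = (\<integral> \<omega>. (\<Sum>i\<in>Gen k. (Y i \<omega>)\<^sup>2) \<partial>M)"
  proof (rule integral_cong_AE)
    show "(\<lambda>\<omega>. R2 M S \<mu> X f p n \<omega>) \<in> borel_measurable M"
      unfolding R2_def by measurable
    show "(\<lambda>\<omega>. \<Sum>i\<in>Gen k. (Y i \<omega>)\<^sup>2) \<in> borel_measurable M" by measurable
    show "AE \<omega> in M. R2 M S \<mu> X f p n \<omega> = (\<Sum>i\<in>Gen k. (Y i \<omega>)\<^sup>2)"
      using AE1 by eventually_elim (simp add: R2_def k_def q_def)
  qed
  also have "\<dots> \<le> (\<integral> \<omega>. (\<Sum>i\<in>Gen k. K * (g (X i \<omega>))\<^sup>2) \<partial>M)"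
    using iY ig2 Yb by (intro integral_mono) (auto intro!: sum_mono)
  also have "\<dots> = K * (\<integral> \<omega>. (\<Sum>i\<in>Gen k. (g (X i \<omega>))\<^sup>2) \<partial>M)"
    by (simp add: sum_distrib_left[symmetric])
  also have "\<dots> \<le> K * (2 ^ k * C)" using C K0 by (intro mult_left_mono) auto
  also have "\<dots> = C * (real q + 1)\<^sup>2 * (\<theta>\<^sup>2 / 2) ^ q"
    using tsq unfolding K_def nk by (simp add: power_add power_mult power_divide field_simps)
  finally show ?thesis by (simp add: q_def \<theta>_def)
qed

end


lemma lim_aux:
  fixes r :: real assumes r: "0 \<le> r" "r < 1"
  shows "(\<lambda>k. C * (real k + 1)\<^sup>2 * r ^ k) \<longlonglongrightarrow> 0"
proof -
  define s where "s = sqrt r"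
  have s: "0 \<le> s" "s < 1" using r by (auto simp: s_def)
  have "(\<lambda>k. of_nat k * s ^ k) \<longlonglongrightarrow> 0" using s by (intro powser_times_n_limit_0) auto
  moreover have "(\<lambda>k. s ^ k) \<longlonglongrightarrow> 0" using s by (intro LIMSEQ_power_zero) auto
  ultimately have "(\<lambda>k. real k * s ^ k + s ^ k) \<longlonglongrightarrow> 0 + 0" by (intro tendsto_add) auto
  then have "(\<lambda>k. (real k * s ^ k + s ^ k) * (real k * s ^ k + s ^ k)) \<longlonglongrightarrow> 0 * 0"
    by (intro tendsto_mult) auto
  then have "(\<lambda>k. C * ((real k * s ^ k + s ^ k) * (real k * s ^ k + s ^ k))) \<longlonglongrightarrow> C * (0 * 0)"
    by (rule tendsto_mult_left)
  moreover have "C * ((real k * s ^ k + s ^ k) * (real k * s ^ k + s ^ k)) = C * (real k + 1)\<^sup>2 * r ^ k" for k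
  proof -
    have "r ^ k = (s ^ k) * (s ^ k)" using r by (simp add: s_def power_mult_distrib[symmetric] real_sqrt_mult[symmetric])
    then show ?thesis by (simp add: algebra_simps power2_eq_square)
  qed
  ultimately show ?thesis by simp
qed

theorem lemma4p3:
  fixes M :: "'w measure" and S :: "'s measure" and \<nu> \<mu> :: "'s measure"
    and P :: "'s \<Rightarrow> ('s \<times> 's) measure" and X :: "bool list \<Rightarrow> 'w \<Rightarrow> 's"
    and F :: "('s \<Rightarrow> real) set" and \<alpha> :: real
    and f :: "nat \<Rightarrow> 's \<Rightarrow> real" and g :: "'s \<Rightarrow> real" and p :: "nat \<Rightarrow> nat"
  assumes kernel: "P \<in> S \<rightarrow>\<^sub>M prob_algebra (S \<Otimes>\<^sub>M S)"
    and nu: "prob_space \<nu>" "sets \<nu> = sets S"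
    and bmc: "BMC M S \<nu> P X"
    and F: "assumption_F S \<nu> P F"
    and F2: "assumption_F2 S P F \<mu> \<alpha>"
    and alpha: "0 < \<alpha>" "\<alpha> < 1 / sqrt 2"
    and fF: "\<forall>l. f l \<in> F"
    and gF: "g \<in> F"
    and fbound: "\<forall>n l. \<forall>x\<in>space S. \<bar>(Qop S P ^^ n) (f l) x\<bar> \<le> g x"
    and fgeom: "\<forall>n l. \<forall>x\<in>space S. \<bar>(Qop S P ^^ n) (f l) x - (\<integral> y. f l y \<partial>\<mu>)\<bar> \<le> \<alpha> ^ n * g x"
    and p_mono: "mono p"
    and p_pos: "\<forall>n. 0 < p n"
    and p_less: "\<forall>n\<ge>2. p n < n"
    and p_ratio: "(\<lambda>n. real (p n) / real n) \<longlonglongrightarrow> 1"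
    and p_gap: "\<forall>c>0. filterlim (\<lambda>n. real n - real (p n) - c * ln (real n)) at_top sequentially"
  shows "(\<lambda>n. \<integral> \<omega>. R2 M S \<mu> X f p n \<omega> \<partial>M) \<longlonglongrightarrow> 0"
proof -
  have "fl S P M \<nu> X F"
    unfolding fl_def fl_axioms_def bmcl_def bmcl_axioms_def kern_def using kernel bmc F nu by blast
  then interpret fl S P M \<nu> X F .
  have fm[measurable]: "\<And>l. f l \<in> borel_measurable S" using fF F_meas by auto
  have fb: "\<And>l x. x \<in> space S \<Longrightarrow> \<bar>f l x\<bar> \<le> g x" using fbound[rule_format, of _ 0] by simp
  have gp: "\<And>y. y \<in> space S \<Longrightarrow> 0 \<le> g y" using fb abs_ge_zero order_trans by blast
  have a1: "\<alpha> < 1" using F2 by (simp add: assumption_F2_def)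
  obtain h where h: "h \<in> F" "\<forall>n. \<forall>x\<in>space S. \<bar>(Qop S P ^^ n) (\<lambda>x. (g x)\<^sup>2) x - (\<integral> y. (g y)\<^sup>2 \<partial>\<mu>)\<bar> \<le> \<alpha> ^ n * h x"
    using F2 F_sq[OF gF] unfolding assumption_F2_def by blast
  define C where "C = (\<integral> x. \<bar>\<integral> y. (g y)\<^sup>2 \<partial>\<mu>\<bar> + \<bar>h x\<bar> \<partial>\<nu>)"
  have Cb: "(\<integral> \<omega>. (\<Sum>i\<in>Gen k. (g (X i \<omega>))\<^sup>2) \<partial>M) \<le> 2 ^ k * C" for k
    unfolding C_def using h alpha a1 by (intro sumg2_bound[OF gF gp h(1)]) auto
  define r where "r = (max (2*\<alpha>) 1)\<^sup>2 / 2"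
  have r: "0 \<le> r" "r < 1"
  proof -
    show "0 \<le> r" by (simp add: r_def)
    have "\<alpha> * sqrt 2 < 1" using alpha by (simp add: field_simps)
    then have "(\<alpha> * sqrt 2)\<^sup>2 < 1\<^sup>2" using alpha by (intro power_strict_mono) auto
    then have "(2 * \<alpha>)\<^sup>2 < 2" by (simp add: power_mult_distrib)
    then have "(max (2*\<alpha>) 1)\<^sup>2 < 2" by (simp add: max_def)
    then show "r < 1" by (simp add: r_def)
  qed
  have bound: "eventually (\<lambda>n. (\<integral> \<omega>. R2 M S \<mu> X f p n \<omega> \<partial>M) \<le> C * (real (p n) + 1)\<^sup>2 * r ^ p n) sequentially"
  proof (rule eventually_sequentiallyI[of 2])
    fix n :: nat assume "2 \<le> n"
    then have "p n \<le> n" using p_less by (simp add: less_imp_le)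
    then show "(\<integral> \<omega>. R2 M S \<mu> X f p n \<omega> \<partial>M) \<le> C * (real (p n) + 1)\<^sup>2 * r ^ p n"
      unfolding r_def using fgeom alpha
      by (intro R2_bound[OF fm gF fb _ _ Cb]) auto
  qed
  have nonneg: "eventually (\<lambda>n. 0 \<le> (\<integral> \<omega>. R2 M S \<mu> X f p n \<omega> \<partial>M)) sequentially"
    by (intro always_eventually allI integral_nonneg_AE) (auto simp: R2_def intro!: sum_nonneg)
  have pinf: "filterlim p at_top sequentially"
    unfolding filterlim_at_top
  proof
    fix Z :: nat
    have "eventually (\<lambda>n. real (p n) / real n > 1/2) sequentially"
      using order_tendstoD(1)[OF p_ratio, of "1/2"] by simp
    moreover have "eventually (\<lambda>n. n \<ge> 2 * Z + 1) sequentially" by (rule eventually_ge_at_top)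
    ultimately show "eventually (\<lambda>n. Z \<le> p n) sequentially"
    proof eventually_elim
      case (elim n)
      then have "real n / 2 < real (p n)" by (simp add: field_simps)
      then show ?case using elim by linarith
    qed
  qed
  have lim: "(\<lambda>n. C * (real (p n) + 1)\<^sup>2 * r ^ p n) \<longlonglongrightarrow> 0"
    using filterlim_compose[OF lim_aux[OF r, of C] pinf] .
  show ?thesis
    by (rule tendsto_sandwich[OF nonneg bound tendsto_const lim])
qed


end
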